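(* Let $\operatorname{MED}_2(f)$ be the number of numerical semigroups with maximal embedding dimension, Frobenius number $f$, and depth $2$. There are constants $D_0, D_1, D_2, D_3$ such that $\operatorname{MED}_2(f) \sim D_i \cdot 2^{f/4}$ as $f \to \infty$ with $f \equiv i \pmod 4$.
   Context: A numerical semigroup is a subset $\Lambda \subseteq \mathbb{N}_0$ containing $0$, closed under addition, with finite complement; its multiplicity $m$ is $\min(\Lambda\setminus\{0\})$, its conductor $c$ is the least integer with $c + \mathbb{N}_0 \subseteq \Lambda$, its Frobenius number is $c - 1$, and its depth is $\lceil c/m \rceil$. $\Lambda$ has maximal embedding dimension if its minimal generating set has exactly $m$ elements (equivalently, the Apéry set consisting of $m$ and the least element of $\Lambda$ in each nonzero residue class mod $m$ minimally generates $\Lambda$). *)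

theory Defs
  imports Complex_Main "HOL-Library.Landau_Symbols"
begin

definition numerical_semigroup :: "nat set \<Rightarrow> bool" where
  "numerical_semigroup S \<longleftrightarrow>
     0 \<in> S \<and> (\<forall>x\<in>S. \<forall>y\<in>S. x + y \<in> S) \<and> finite (UNIV - S)"

definition multiplicity_ns :: "nat set \<Rightarrow> nat" where
  "multiplicity_ns S = (LEAST x. x \<in> S \<and> x \<noteq> 0)"

definition conductor :: "nat set \<Rightarrow> nat" where
  "conductor S = (LEAST c. \<forall>n\<ge>c. n \<in> S)"

definition frobenius :: "nat set \<Rightarrow> int" where
  "frobenius S = int (conductor S) - 1"

definition depth :: "nat set \<Rightarrow> int" where
  "depth S = \<lceil>real (conductor S) / real (multiplicity_ns S)\<rceil>"

definition minimal_generators :: "nat set \<Rightarrow> nat set" where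
  "minimal_generators S =
     {x \<in> S. x \<noteq> 0 \<and> \<not> (\<exists>a\<in>S. \<exists>b\<in>S. a \<noteq> 0 \<and> b \<noteq> 0 \<and> x = a + b)}"

definition max_embedding_dim :: "nat set \<Rightarrow> bool" where
  "max_embedding_dim S \<longleftrightarrow> card (minimal_generators S) = multiplicity_ns S"

definition MED2 :: "nat \<Rightarrow> nat" where
  "MED2 f = card {S. numerical_semigroup S \<and> max_embedding_dim S \<and>
                     frobenius S = int f \<and> depth S = 2}"

end

theory Submission
  imports Defs
begin

definition fset :: "nat \<Rightarrow> nat set \<Rightarrow> bool" where
  "fset F T \<longleftrightarrow> T \<subseteq> {1..<F} \<and> (\<forall>a\<in>T. \<forall>b\<in>T. a + b \<noteq> F) \<and>
     (\<forall>a\<in>T. \<forall>b\<in>T. a + b < F \<longrightarrow> a + b \<in> T)"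

definition NF :: "nat \<Rightarrow> nat" where "NF F = card {T. fset F T}"

definition Sp :: "nat \<Rightarrow> nat set \<Rightarrow> nat set" where
  "Sp k T = insert 0 (T \<union> {k<..})"

definition semi :: "nat \<Rightarrow> nat \<Rightarrow> nat set \<Rightarrow> nat set" where
  "semi f k T = insert 0 ((+) (f - k) ` Sp k T)"

lemma semi_mem: "x \<in> semi f k T \<longleftrightarrow> x = 0 \<or> (f - k \<le> x \<and> x - (f - k) \<in> Sp k T)"
  unfolding semi_def by (auto simp: image_iff intro!: bexI[of _ "x - (f - k)"])

lemma Sp_mem: "x \<in> Sp k T \<longleftrightarrow> x = 0 \<or> x \<in> T \<or> k < x"
  unfolding Sp_def by auto

context
  fixes f k :: nat and T :: "nat set"
  assumes k1: "1 \<le> k" and kf: "2 * k < f" and Tk: "T \<subseteq> {1..<k}"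
begin


lemma km: "k < f - k" using kf by simp

lemma semi_ge: "x \<in> semi f k T \<Longrightarrow> x \<noteq> 0 \<Longrightarrow> f - k \<le> x"
  by (simp add: semi_mem)

lemma m_in: "f - k \<in> semi f k T" by (simp add: semi_mem Sp_mem)

lemma big_in: "f < x \<Longrightarrow> x \<in> semi f k T"
  using kf by (auto simp: semi_mem Sp_mem)

lemma f_notin: "f \<notin> semi f k T"
  using kf Tk k1 by (auto simp: semi_mem Sp_mem)

lemma semi_ns: "numerical_semigroup (semi f k T)"
  unfolding numerical_semigroup_def
proof (intro conjI ballI)
  show "0 \<in> semi f k T" by (simp add: semi_mem)
next
  fix x y assume x: "x \<in> semi f k T" and y: "y \<in> semi f k T"
  show "x + y \<in> semi f k T"
  proof (cases "x = 0 \<or> y = 0")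
    case True then show ?thesis using x y by auto
  next
    case False
    then have "f - k \<le> x" "f - k \<le> y" using semi_ge x y by auto
    then have "f < x + y" using kf by linarith
    then show ?thesis by (rule big_in)
  qed
next
  have "UNIV - semi f k T \<subseteq> {..f}" using big_in by (auto simp: not_less[symmetric])
  then show "finite (UNIV - semi f k T)" using finite_subset by blast
qed

lemma semi_mult: "multiplicity_ns (semi f k T) = f - k"
  unfolding multiplicity_ns_def
proof (rule Least_equality)
  show "f - k \<in> semi f k T \<and> f - k \<noteq> 0" using m_in km by auto
next
  fix y assume "y \<in> semi f k T \<and> y \<noteq> 0" then show "f - k \<le> y" using semi_ge by auto
qed

lemma semi_cond: "conductor (semi f k T) = f + 1"
  unfolding conductor_def
proof (rule Least_equality)
  show "\<forall>n\<ge>f + 1. n \<in> semi f k T" using big_in by auto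
next
  fix c assume "\<forall>n\<ge>c. n \<in> semi f k T"
  then show "f + 1 \<le> c" using f_notin by (metis not_less_eq_eq Suc_eq_plus1)
qed

lemma semi_frob: "frobenius (semi f k T) = int f"
  by (simp add: frobenius_def semi_cond)

lemma semi_depth: "depth (semi f k T) = 2"
proof -
  have m0: "real (f - k) > 0" using km by simp
  have "real (f + 1) / real (f - k) \<le> 2"
    using m0 kf by (simp add: divide_le_eq of_nat_diff)
  moreover have "1 < real (f + 1) / real (f - k)"
    using m0 kf by (simp add: less_divide_eq of_nat_diff)
  ultimately show ?thesis
    unfolding depth_def semi_cond semi_mult by (simp add: ceiling_eq_iff)
qed

definition "phi r = (if r \<in> Sp k T then f - k + r else 2 * (f - k) + r)"
definition "RR = {r. r < f - k \<and> (r \<in> Sp k T \<or> \<not> (\<exists>a\<in>Sp k T. \<exists>b\<in>Sp k T. r = a + b))}"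

lemma mingen_eq: "minimal_generators (semi f k T) = phi ` RR"
proof (intro equalityI subsetI)
  fix x assume x: "x \<in> minimal_generators (semi f k T)"
  then have xS: "x \<in> semi f k T" and x0: "x \<noteq> 0"
    and nd: "\<not> (\<exists>a\<in>semi f k T. \<exists>b\<in>semi f k T. a \<noteq> 0 \<and> b \<noteq> 0 \<and> x = a + b)"
    unfolding minimal_generators_def by auto
  have xs: "f - k \<le> x" "x - (f - k) \<in> Sp k T" using xS x0 by (auto simp: semi_mem)
  define s where "s = x - (f - k)"
  have s: "s \<in> Sp k T" "x = f - k + s" using xs s_def by auto
  have mnz: "f - k \<noteq> 0" using km by simp
  show "x \<in> phi ` RR"
  proof (cases "s < f - k")
    case True
    then show ?thesis using s unfolding RR_def phi_def by (auto intro!: image_eqI[of _ _ s])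
  next
    case False
    define r where "r = s - (f - k)"
    have sr: "s = f - k + r" using False r_def by simp
    have rn: "r \<notin> Sp k T"
    proof
      assume "r \<in> Sp k T"
      then have "f - k + r \<in> semi f k T" by (simp add: semi_mem)
      moreover have "x = (f - k) + (f - k + r)" using s sr by simp
      moreover have "f - k + r \<noteq> 0" using mnz by simp
      ultimately show False using nd m_in mnz by blast
    qed
    then have rk: "r \<le> k" by (simp add: Sp_mem)
    have nd2: "\<not> (\<exists>a\<in>Sp k T. \<exists>b\<in>Sp k T. r = a + b)"
    proof
      assume "\<exists>a\<in>Sp k T. \<exists>b\<in>Sp k T. r = a + b"
      then obtain a b where ab: "a \<in> Sp k T" "b \<in> Sp k T" "r = a + b" by blast
      have "f - k + a \<in> semi f k T" "f - k + b \<in> semi f k T" using ab by (auto simp: semi_mem)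
      moreover have "x = (f - k + a) + (f - k + b)" using s sr ab by simp
      moreover have "f - k + a \<noteq> 0" "f - k + b \<noteq> 0" using mnz by auto
      ultimately show False using nd by blast
    qed
    have "r < f - k" using rk km by simp
    then have "r \<in> RR" using nd2 unfolding RR_def by auto
    moreover have "phi r = x" using rn s sr unfolding phi_def by simp
    ultimately show ?thesis by blast
  qed
next
  fix x assume "x \<in> phi ` RR"
  then obtain r where r: "r \<in> RR" "x = phi r" by blast
  show "x \<in> minimal_generators (semi f k T)"
  proof (cases "r \<in> Sp k T")
    case True
    then have x: "x = f - k + r" using r unfolding phi_def by simp
    have rm: "r < f - k" using r unfolding RR_def by auto
    have "x \<in> semi f k T" using True x by (simp add: semi_mem)
    moreover have "x \<noteq> 0" using x km by simp
    moreover have "\<not> (\<exists>a\<in>semi f k T. \<exists>b\<in>semi f k T. a \<noteq> 0 \<and> b \<noteq> 0 \<and> x = a + b)"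
    proof
      assume "\<exists>a\<in>semi f k T. \<exists>b\<in>semi f k T. a \<noteq> 0 \<and> b \<noteq> 0 \<and> x = a + b"
      then obtain a b where "a \<in> semi f k T" "b \<in> semi f k T" "a \<noteq> 0" "b \<noteq> 0" "x = a + b" by blast
      then have "f - k \<le> a" "f - k \<le> b" using semi_ge by auto
      then show False using \<open>x = a + b\<close> x rm by linarith
    qed
    ultimately show ?thesis unfolding minimal_generators_def by blast
  next
    case False
    then have x: "x = 2 * (f - k) + r" and nd: "\<not> (\<exists>a\<in>Sp k T. \<exists>b\<in>Sp k T. r = a + b)"
      using r unfolding phi_def RR_def by auto
    have "r \<le> k" using False by (simp add: Sp_mem)
    have hr: "f - k + r \<in> Sp k T" unfolding Sp_mem using km by arith
    have e: "x = (f - k) + (f - k + r)" using x by simp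
    have "x \<in> (+) (f - k) ` Sp k T" using e hr by (rule image_eqI)
    then have "x \<in> semi f k T" unfolding semi_def by blast
    moreover have "x \<noteq> 0" using x km by linarith
    moreover have "\<not> (\<exists>a\<in>semi f k T. \<exists>b\<in>semi f k T. a \<noteq> 0 \<and> b \<noteq> 0 \<and> x = a + b)"
    proof
      assume "\<exists>a\<in>semi f k T. \<exists>b\<in>semi f k T. a \<noteq> 0 \<and> b \<noteq> 0 \<and> x = a + b"
      then obtain a b where ab: "a \<in> semi f k T" "b \<in> semi f k T" "a \<noteq> 0" "b \<noteq> 0" "x = a + b" by blast
      then have "f - k \<le> a" "a - (f - k) \<in> Sp k T" "f - k \<le> b" "b - (f - k) \<in> Sp k T"
        by (auto simp: semi_mem)
      moreover have "r = (a - (f - k)) + (b - (f - k))" using ab(5) x calculation by simp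
      ultimately show False using nd by blast
    qed
    ultimately show ?thesis unfolding minimal_generators_def by blast
  qed
qed

lemma phi_inj: "inj_on phi RR"
proof (rule inj_onI)
  fix x y assume "x \<in> RR" "y \<in> RR" "phi x = phi y"
  then show "x = y" unfolding phi_def RR_def by (auto split: if_splits)
qed

lemma card_mingen: "card (minimal_generators (semi f k T)) = card RR"
  using mingen_eq phi_inj by (simp add: card_image)

lemma med_iff: "max_embedding_dim (semi f k T) \<longleftrightarrow>
   (\<forall>a\<in>T. \<forall>b\<in>T. a + b \<noteq> k \<and> (a + b < k \<longrightarrow> a + b \<in> T))"
proof -
  have RRsub: "RR \<subseteq> {..<f - k}" unfolding RR_def by auto
  have "max_embedding_dim (semi f k T) \<longleftrightarrow> card RR = card {..<f - k}"
    unfolding max_embedding_dim_def card_mingen semi_mult by simp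
  also have "\<dots> \<longleftrightarrow> RR = {..<f - k}"
    using RRsub by (metis card_subset_eq finite_lessThan)
  also have "\<dots> \<longleftrightarrow> (\<forall>r < f - k. r \<notin> Sp k T \<longrightarrow> \<not> (\<exists>a\<in>Sp k T. \<exists>b\<in>Sp k T. r = a + b))"
    unfolding RR_def by auto
  also have "\<dots> \<longleftrightarrow> (\<forall>a\<in>T. \<forall>b\<in>T. a + b \<noteq> k \<and> (a + b < k \<longrightarrow> a + b \<in> T))"
  proof
    assume H: "\<forall>r < f - k. r \<notin> Sp k T \<longrightarrow> \<not> (\<exists>a\<in>Sp k T. \<exists>b\<in>Sp k T. r = a + b)"
    show "\<forall>a\<in>T. \<forall>b\<in>T. a + b \<noteq> k \<and> (a + b < k \<longrightarrow> a + b \<in> T)"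
    proof (intro ballI conjI impI)
      fix a b assume ab: "a \<in> T" "b \<in> T"
      then have abS: "a \<in> Sp k T" "b \<in> Sp k T" by (auto simp: Sp_mem)
      show "a + b \<noteq> k"
      proof
        assume "a + b = k"
        moreover have "k \<notin> Sp k T" using Tk k1 by (auto simp: Sp_mem)
        ultimately show False using H abS km by blast
      qed
      assume abk: "a + b < k"
      have ab0: "a + b \<noteq> 0" using ab Tk by auto
      show "a + b \<in> T"
      proof (rule ccontr)
        assume "a + b \<notin> T"
        then have "a + b \<notin> Sp k T" using abk ab0 by (simp add: Sp_mem)
        moreover have "a + b < f - k" using abk km by linarith
        ultimately show False using H abS by blast
      qed
    qed
  next
    assume H: "\<forall>a\<in>T. \<forall>b\<in>T. a + b \<noteq> k \<and> (a + b < k \<longrightarrow> a + b \<in> T)"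
    show "\<forall>r < f - k. r \<notin> Sp k T \<longrightarrow> \<not> (\<exists>a\<in>Sp k T. \<exists>b\<in>Sp k T. r = a + b)"
    proof (intro allI impI notI)
      fix r assume r: "r < f - k" "r \<notin> Sp k T" "\<exists>a\<in>Sp k T. \<exists>b\<in>Sp k T. r = a + b"
      then obtain a b where ab: "a \<in> Sp k T" "b \<in> Sp k T" "r = a + b" by blast
      have rk: "r \<le> k" "r \<noteq> 0" "r \<notin> T" using r by (auto simp: Sp_mem)
      have "a \<noteq> 0"
      proof
        assume "a = 0" then have "r = b" using ab(3) by simp
        then show False using r(2) ab(2) by simp
      qed
      moreover have "b \<noteq> 0"
      proof
        assume "b = 0" then have "r = a" using ab(3) by simp
        then show False using r(2) ab(1) by simp
      qed
      ultimately have "a \<in> T" "b \<in> T" using ab rk by (auto simp: Sp_mem)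
      then show False using H ab rk by (metis le_neq_implies_less)
    qed
  qed
  finally show ?thesis .
qed

end


lemma ns_mult:
  assumes "numerical_semigroup S"
  shows "multiplicity_ns S \<in> S" "multiplicity_ns S \<noteq> 0" "\<And>x. x \<in> S \<Longrightarrow> x \<noteq> 0 \<Longrightarrow> multiplicity_ns S \<le> x"
proof -
  have fin: "finite (UNIV - S)" using assms unfolding numerical_semigroup_def by blast
  have "\<exists>x. x \<in> S \<and> x \<noteq> 0"
  proof (rule ccontr)
    assume "\<not> (\<exists>x. x \<in> S \<and> x \<noteq> 0)"
    then have "UNIV - {0::nat} \<subseteq> UNIV - S" by auto
    then have "finite (UNIV - {0::nat})" using fin finite_subset by blast
    then show False by simp
  qed
  then have "(LEAST x. x \<in> S \<and> x \<noteq> 0) \<in> S \<and> (LEAST x. x \<in> S \<and> x \<noteq> 0) \<noteq> 0"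
    by (rule LeastI_ex)
  then show "multiplicity_ns S \<in> S" "multiplicity_ns S \<noteq> 0"
    unfolding multiplicity_ns_def by auto
  show "\<And>x. x \<in> S \<Longrightarrow> x \<noteq> 0 \<Longrightarrow> multiplicity_ns S \<le> x"
    unfolding multiplicity_ns_def by (simp add: Least_le)
qed

lemma ns_cond:
  assumes "numerical_semigroup S"
  shows "\<And>n. conductor S \<le> n \<Longrightarrow> n \<in> S" "conductor S > 0 \<Longrightarrow> conductor S - 1 \<notin> S"
proof -
  have fin: "finite (UNIV - S)" using assms unfolding numerical_semigroup_def by blast
  then obtain b where b: "\<forall>n\<in>UNIV - S. n < b" using finite_nat_set_iff_bounded by blast
  have ex: "\<forall>n\<ge>b. n \<in> S"
  proof (intro allI impI)
    fix n assume "b \<le> n"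
    show "n \<in> S"
    proof (rule ccontr)
      assume "n \<notin> S" then have "n < b" using b by blast
      then show False using \<open>b \<le> n\<close> by simp
    qed
  qed
  then have allc: "\<forall>n\<ge>conductor S. n \<in> S" unfolding conductor_def by (rule LeastI)
  then show "\<And>n. conductor S \<le> n \<Longrightarrow> n \<in> S" by blast
  show "conductor S > 0 \<Longrightarrow> conductor S - 1 \<notin> S"
  proof
    assume c0: "conductor S > 0" and cS: "conductor S - 1 \<in> S"
    have "\<forall>n\<ge>conductor S - 1. n \<in> S"
    proof (intro allI impI)
      fix n assume "conductor S - 1 \<le> n"
      then have "n = conductor S - 1 \<or> conductor S \<le> n" by linarith
      then show "n \<in> S" using cS allc by auto
    qed
    then have "conductor S \<le> conductor S - 1" unfolding conductor_def
      by (rule Least_le)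
    then show False using c0 by linarith
  qed
qed

lemma MED_decomp:
  assumes ns: "numerical_semigroup S" and med: "max_embedding_dim S"
    and fr: "frobenius S = int f" and dp: "depth S = 2"
  shows "\<exists>k T. 1 \<le> k \<and> 2 * k < f \<and> T \<subseteq> {1..<k} \<and> S = semi f k T"
proof -
  define m where "m = multiplicity_ns S"
  have mS: "m \<in> S" and m0: "m \<noteq> 0" and mmin: "\<And>x. x \<in> S \<Longrightarrow> x \<noteq> 0 \<Longrightarrow> m \<le> x"
    using ns_mult[OF ns] unfolding m_def by auto
  have c: "conductor S = f + 1" using fr unfolding frobenius_def by linarith
  have big: "\<And>n. f + 1 \<le> n \<Longrightarrow> n \<in> S" using ns_cond(1)[OF ns] c by auto
  have fS: "f \<notin> S" using ns_cond(2)[OF ns] c by auto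
  have "\<lceil>real (f + 1) / real m\<rceil> = 2" using dp unfolding depth_def c m_def by simp
  then have "1 < real (f + 1) / real m" "real (f + 1) / real m \<le> 2"
    by (simp_all add: ceiling_eq_iff)
  moreover have mpos: "real m > 0" using m0 by simp
  ultimately have "real m < real (f + 1)" "real (f + 1) \<le> 2 * real m"
    by (simp_all add: less_divide_eq divide_le_eq)
  then have mf1: "m < f + 1" and f2m: "f + 1 \<le> 2 * m" by linarith+
  have "m \<noteq> f" using mS fS by auto
  then have mf: "m < f" using mf1 by simp
  define k where "k = f - m"
  have k1: "1 \<le> k" using mf k_def by simp
  have kf: "2 * k < f" using f2m mf k_def by simp
  have mk: "m = f - k" using mf k_def by simp
  define T where "T = {x. 0 < x \<and> x < k \<and> m + x \<in> S}"
  have Tk: "T \<subseteq> {1..<k}" unfolding T_def by auto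
  have "S = semi f k T"
  proof (intro equalityI subsetI)
    fix x assume xS: "x \<in> S"
    show "x \<in> semi f k T"
    proof (cases "x = 0")
      case True then show ?thesis by (simp add: semi_mem)
    next
      case False
      then have mx: "m \<le> x" using mmin xS by auto
      have "x - m \<noteq> k"
      proof
        assume "x - m = k" then have "x = f" using mx k_def mf by linarith
        then show False using xS fS by simp
      qed
      then have "x - m = 0 \<or> x - m \<in> T \<or> k < x - m"
        unfolding T_def using xS mx by auto
      then show ?thesis using mx mk by (auto simp: semi_mem Sp_mem)
    qed
  next
    fix x assume x: "x \<in> semi f k T"
    show "x \<in> S"
    proof (cases "x = 0")
      case True then show ?thesis using ns unfolding numerical_semigroup_def by simp
    next
      case False
      then have mx: "m \<le> x" and xs: "x - m = 0 \<or> x - m \<in> T \<or> k < x - m"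
        using x mk by (auto simp: semi_mem Sp_mem)
      from xs show ?thesis
      proof (elim disjE)
        assume "x - m = 0" then have "x = m" using mx by simp
        then show ?thesis using mS by simp
      next
        assume "x - m \<in> T" then show ?thesis unfolding T_def using mx by auto
      next
        assume "k < x - m" then have "f + 1 \<le> x" using mx k_def mf by linarith
        then show ?thesis by (rule big)
      qed
    qed
  qed
  then show ?thesis using k1 kf Tk by blast
qed

lemma MED_set:
  "{S. numerical_semigroup S \<and> max_embedding_dim S \<and> frobenius S = int f \<and> depth S = 2} =
   (\<lambda>(k, T). semi f k T) ` (SIGMA k:{1..(f - 1) div 2}. {T. fset k T})"
proof (intro equalityI subsetI)
  fix S assume "S \<in> {S. numerical_semigroup S \<and> max_embedding_dim S \<and> frobenius S = int f \<and> depth S = 2}"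
  then have H: "numerical_semigroup S" "max_embedding_dim S" "frobenius S = int f" "depth S = 2" by auto
  obtain k T where kT: "1 \<le> k" "2 * k < f" "T \<subseteq> {1..<k}" "S = semi f k T"
    using MED_decomp[OF H] by blast
  have "fset k T" using med_iff[OF kT(1-3)] H(2) kT(3,4) unfolding fset_def by auto
  moreover have "k \<in> {1..(f - 1) div 2}" using kT by auto
  ultimately have "(k, T) \<in> (SIGMA k:{1..(f - 1) div 2}. {T. fset k T})" by blast
  moreover have "S = (\<lambda>(k, T). semi f k T) (k, T)" using kT(4) by simp
  ultimately show "S \<in> (\<lambda>(k, T). semi f k T) ` (SIGMA k:{1..(f - 1) div 2}. {T. fset k T})"
    by (rule rev_image_eqI)
next
  fix S assume "S \<in> (\<lambda>(k, T). semi f k T) ` (SIGMA k:{1..(f - 1) div 2}. {T. fset k T})"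
  then obtain p where p: "p \<in> (SIGMA k:{1..(f - 1) div 2}. {T. fset k T})" "S = (\<lambda>(k, T). semi f k T) p" by blast
  obtain k T where kT: "p = (k, T)" by (cases p)
  have k: "k \<in> {1..(f - 1) div 2}" and T: "fset k T" and S: "S = semi f k T" using p kT by auto
  have k1: "1 \<le> k" and kf: "2 * k < f" using k by auto
  have Tk: "T \<subseteq> {1..<k}" using T unfolding fset_def by auto
  have "max_embedding_dim S" using med_iff[OF k1 kf Tk] T S unfolding fset_def by auto
  then show "S \<in> {S. numerical_semigroup S \<and> max_embedding_dim S \<and> frobenius S = int f \<and> depth S = 2}"
    using semi_ns[OF k1 kf Tk] semi_frob[OF k1 kf Tk] semi_depth[OF k1 kf Tk] S by auto
qed

lemma semi_inj: "inj_on (\<lambda>(k, T). semi f k T) (SIGMA k:{1..(f - 1) div 2}. {T. fset k T})"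
proof (rule inj_onI, clarify)
  fix k T k' T'
  assume k: "k \<in> {1..(f - 1) div 2}" and T: "fset k T" and k': "k' \<in> {1..(f - 1) div 2}"
    and T': "fset k' T'" and eq: "semi f k T = semi f k' T'"
  have k1: "1 \<le> k" and kf: "2 * k < f" using k by auto
  have k1': "1 \<le> k'" and kf': "2 * k' < f" using k' by auto
  have Tk: "T \<subseteq> {1..<k}" using T unfolding fset_def by auto
  have Tk': "T' \<subseteq> {1..<k'}" using T' unfolding fset_def by auto
  have "multiplicity_ns (semi f k T) = multiplicity_ns (semi f k' T')" using eq by simp
  then have "f - k = f - k'" using semi_mult[OF k1 kf Tk] semi_mult[OF k1' kf' Tk'] by simp
  then have kk: "k = k'" using kf kf' by simp
  have "T = T'"
  proof (intro equalityI subsetI)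
    fix x assume "x \<in> T"
    then have "f - k + x \<in> semi f k T" "x < k" "0 < x" using Tk by (auto simp: semi_mem Sp_mem)
    then have "f - k + x \<in> semi f k T'" using eq kk by simp
    then show "x \<in> T'" using \<open>x < k\<close> \<open>0 < x\<close> by (auto simp: semi_mem Sp_mem)
  next
    fix x assume "x \<in> T'"
    then have "f - k + x \<in> semi f k T'" "x < k" "0 < x" using Tk' kk by (auto simp: semi_mem Sp_mem)
    then have "f - k + x \<in> semi f k T" using eq kk by simp
    then show "x \<in> T" using \<open>x < k\<close> \<open>0 < x\<close> by (auto simp: semi_mem Sp_mem)
  qed
  then show "k = k' \<and> T = T'" using kk by simp
qed

lemma fset_finite: "finite {T. fset k T}"
proof -
  have "{T. fset k T} \<subseteq> Pow {1..<k}" unfolding fset_def by auto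
  then show ?thesis using finite_subset by blast
qed

lemma MED2_sum: "MED2 f = (\<Sum>k\<in>{1..(f - 1) div 2}. NF k)"
proof -
  have "MED2 f = card ((\<lambda>(k, T). semi f k T) ` (SIGMA k:{1..(f - 1) div 2}. {T. fset k T}))"
    unfolding MED2_def MED_set ..
  also have "\<dots> = card (SIGMA k:{1..(f - 1) div 2}. {T. fset k T})"
    using semi_inj by (rule card_image)
  also have "\<dots> = (\<Sum>k\<in>{1..(f - 1) div 2}. NF k)"
    unfolding NF_def using fset_finite by (simp add: card_SigmaI)
  finally show ?thesis .
qed

definition Hi :: "nat \<Rightarrow> nat set" where "Hi F = {x. x < F \<and> F < 2 * x}"
definition Cm :: "nat \<Rightarrow> nat \<Rightarrow> nat set set" where
  "Cm F m = {T. fset F T \<and> T \<noteq> {} \<and> Min T = m}"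
definition cnt :: "nat \<Rightarrow> nat \<Rightarrow> nat" where "cnt F m = card (Cm F m)"

lemma Hi_eq: "Hi F = {F div 2 + 1..<F}"
proof (rule set_eqI)
  fix x
  have e: "F = 2 * (F div 2) + F mod 2" by simp
  have r: "F mod 2 < 2" by simp
  have "(x < F \<and> F < 2 * x) \<longleftrightarrow> (F div 2 + 1 \<le> x \<and> x < F)"
  proof (intro iffI)
    assume "x < F \<and> F < 2 * x" then show "F div 2 + 1 \<le> x \<and> x < F" using e r by linarith
  next
    assume "F div 2 + 1 \<le> x \<and> x < F" then show "x < F \<and> F < 2 * x" using e r by linarith
  qed
  then show "x \<in> Hi F \<longleftrightarrow> x \<in> {F div 2 + 1..<F}" unfolding Hi_def by simp
qed

lemma card_Hi: "card (Hi F) = F - (F div 2 + 1)"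
  by (simp add: Hi_eq)

lemma fset_Hi: assumes "T \<subseteq> Hi F" shows "fset F T"
proof -
  have H: "\<And>x. x \<in> T \<Longrightarrow> x < F \<and> F < 2 * x" using assms unfolding Hi_def by auto
  show ?thesis unfolding fset_def
  proof (intro conjI ballI impI subsetI)
    fix x assume "x \<in> T" then show "x \<in> {1..<F}" using H[of x] by auto
  next
    fix a b assume "a \<in> T" "b \<in> T" then show "a + b \<noteq> F" using H[of a] H[of b] by linarith
  next
    fix a b assume "a \<in> T" "b \<in> T" "a + b < F" then show "a + b \<in> T" using H[of a] H[of b] by linarith
  qed
qed

lemma Cm_sub: "Cm F m \<subseteq> {T. fset F T}" unfolding Cm_def by auto

lemma Cm_finite: "finite (Cm F m)" using Cm_sub fset_finite finite_subset by blast

lemma fset_fin: "fset F T \<Longrightarrow> finite T"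
  unfolding fset_def using finite_subset by blast

lemma NF_decomp: "NF F = 2 ^ card (Hi F) + (\<Sum>m\<in>{1..F div 2}. cnt F m)"
proof -
  have eq: "{T. fset F T} = Pow (Hi F) \<union> (\<Union>m\<in>{1..F div 2}. Cm F m)"
  proof (intro equalityI subsetI)
    fix T assume T: "T \<in> {T. fset F T}"
    show "T \<in> Pow (Hi F) \<union> (\<Union>m\<in>{1..F div 2}. Cm F m)"
    proof (cases "T \<subseteq> Hi F")
      case True then show ?thesis by auto
    next
      case False
      then obtain x where x: "x \<in> T" "x \<notin> Hi F" by auto
      have fs: "fset F T" using T by simp
      then have fin: "finite T" by (rule fset_fin)
      have ne: "T \<noteq> {}" using x by auto
      have "Min T \<le> x" using fin x by simp
      moreover have "x < F" "1 \<le> x" using fs x unfolding fset_def by auto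
      moreover have "2 * x \<le> F" using x calculation unfolding Hi_def by auto
      moreover have "Min T \<in> T" using fin ne by simp
      then have "1 \<le> Min T" using fs unfolding fset_def by auto
      ultimately have "Min T \<in> {1..F div 2}" by auto
      then show ?thesis using fs ne unfolding Cm_def by blast
    qed
  next
    fix T assume "T \<in> Pow (Hi F) \<union> (\<Union>m\<in>{1..F div 2}. Cm F m)"
    then show "T \<in> {T. fset F T}" using fset_Hi Cm_sub by blast
  qed
  have disj: "Pow (Hi F) \<inter> (\<Union>m\<in>{1..F div 2}. Cm F m) = {}"
  proof (rule ccontr)
    assume "Pow (Hi F) \<inter> (\<Union>m\<in>{1..F div 2}. Cm F m) \<noteq> {}"
    then obtain T m where T: "T \<subseteq> Hi F" "m \<in> {1..F div 2}" "T \<in> Cm F m" by blast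
    then have "fset F T" "T \<noteq> {}" "Min T = m" unfolding Cm_def by auto
    then have "m \<in> T" using fset_fin by (metis Min_in)
    then have "m \<in> Hi F" using T by auto
    then show False using T(2) unfolding Hi_def by auto
  qed
  have fin1: "finite (Pow (Hi F))" by (simp add: Hi_eq)
  have fin2: "finite (\<Union>m\<in>{1..F div 2}. Cm F m)" by (auto simp: Cm_finite)
  have "NF F = card (Pow (Hi F)) + card (\<Union>m\<in>{1..F div 2}. Cm F m)"
    unfolding NF_def eq using card_Un_disjoint[OF fin1 fin2 disj] .
  also have "card (Pow (Hi F)) = 2 ^ card (Hi F)"
    by (simp add: card_Pow Hi_eq)
  also have "card (\<Union>m\<in>{1..F div 2}. Cm F m) = (\<Sum>m\<in>{1..F div 2}. cnt F m)"
    unfolding cnt_def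
  proof (rule card_UN_disjoint)
    show "\<forall>i\<in>{1..F div 2}. finite (Cm F i)" using Cm_finite by blast
    show "\<forall>i\<in>{1..F div 2}. \<forall>j\<in>{1..F div 2}. i \<noteq> j \<longrightarrow> Cm F i \<inter> Cm F j = {}"
      unfolding Cm_def by auto
  qed simp
  finally show ?thesis .
qed

definition ss :: "nat set \<Rightarrow> nat set" where "ss L = {t. \<exists>a\<in>L. \<exists>b\<in>L. t = a + b}"
definition Adm :: "nat \<Rightarrow> nat set set" where
  "Adm d = {L. L \<subseteq> {0..d} \<and> 0 \<in> L \<and> (\<forall>a\<in>L. \<forall>b\<in>L. a + b \<noteq> d)}"
definition Vm :: "nat \<Rightarrow> nat \<Rightarrow> nat set set" where
  "Vm d m = {L \<in> Adm d. \<forall>a\<in>L. \<forall>b\<in>L. a + b + m \<le> d \<longrightarrow> a + b + m \<in> L}"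
definition Fo :: "nat \<Rightarrow> nat \<Rightarrow> nat set \<Rightarrow> nat set" where
  "Fo d m L = {t \<in> ss L. d < t + m \<and> t < d}"

lemma Adm_finite: "finite (Adm d)"
proof -
  have "Adm d \<subseteq> Pow {0..d}" unfolding Adm_def by auto
  then show ?thesis using finite_subset by blast
qed

lemma Vm_finite: "finite (Vm d m)"
  using Adm_finite unfolding Vm_def by simp

lemma card_between:
  assumes "finite B" "A \<subseteq> B"
  shows "card {U. U \<subseteq> B \<and> A \<subseteq> U} = 2 ^ (card B - card A)"
proof -
  have "bij_betw (\<lambda>U. U - A) {U. U \<subseteq> B \<and> A \<subseteq> U} (Pow (B - A))"
  proof (rule bij_betw_byWitness[where f' = "\<lambda>V. V \<union> A"])
    show "\<forall>a\<in>{U. U \<subseteq> B \<and> A \<subseteq> U}. a - A \<union> A = a" by auto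
    show "\<forall>a'\<in>Pow (B - A). a' \<union> A - A = a'" by auto
    show "(\<lambda>U. U - A) ` {U. U \<subseteq> B \<and> A \<subseteq> U} \<subseteq> Pow (B - A)" by auto
    show "(\<lambda>V. V \<union> A) ` Pow (B - A) \<subseteq> {U. U \<subseteq> B \<and> A \<subseteq> U}" using assms(2) by auto
  qed
  then have "card {U. U \<subseteq> B \<and> A \<subseteq> U} = card (Pow (B - A))" by (rule bij_betw_same_card)
  also have "\<dots> = 2 ^ card (B - A)" using assms(1) by (simp add: card_Pow)
  also have "card (B - A) = card B - card A" using assms by (simp add: card_Diff_subset finite_subset)
  finally show ?thesis .
qed

context
  fixes F m :: nat
  assumes m1: "1 \<le> m" and mF: "2 * m \<le> F"
begin

definition "dd = F - 2 * m"
definition "RR2 = {m + dd<..<F}"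
definition "Sig = (SIGMA L:Vm dd m. {U. U \<subseteq> RR2 \<and> (+) (2 * m) ` Fo dd m L \<subseteq> U})"
definition "gmap T = ({x. x \<le> dd \<and> m + x \<in> T}, T \<inter> RR2)"
definition "hmap = (\<lambda>(L, U). (+) m ` L \<union> U)"

lemma F_eq: "F = 2 * m + dd" using mF unfolding dd_def by simp

lemma dd_eq: "dd = F - 2 * m" unfolding dd_def ..

lemma Cm_struct:
  assumes "T \<in> Cm F m"
  shows "fset F T" "m \<in> T" "\<And>x. x \<in> T \<Longrightarrow> m \<le> x \<and> x < F"
proof -
  show fs: "fset F T" using assms unfolding Cm_def by auto
  have fin: "finite T" using fs by (rule fset_fin)
  have ne: "T \<noteq> {}" and mn: "Min T = m" using assms unfolding Cm_def by auto
  show "m \<in> T" using fin ne mn Min_in by blast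
  fix x assume x: "x \<in> T"
  have "m \<le> x" using fin x mn by (metis Min_le)
  moreover have "x < F" using fs x unfolding fset_def by auto
  ultimately show "m \<le> x \<and> x < F" by simp
qed

lemma card_RR2: "card RR2 = m - 1"
  unfolding RR2_def using F_eq by simp

lemma gmap_in: "T \<in> Cm F m \<Longrightarrow> gmap T \<in> Sig"
proof -
  assume T: "T \<in> Cm F m"
  note st = Cm_struct[OF T]
  have fs: "T \<subseteq> {1..<F}" "\<forall>a\<in>T. \<forall>b\<in>T. a + b \<noteq> F" "\<forall>a\<in>T. \<forall>b\<in>T. a + b < F \<longrightarrow> a + b \<in> T"
    using st(1) unfolding fset_def by auto
  define L where "L = {x. x \<le> dd \<and> m + x \<in> T}"
  have "L \<in> Vm dd m"
    unfolding Vm_def Adm_def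
  proof (intro CollectI conjI ballI impI)
    show "L \<subseteq> {0..dd}" unfolding L_def by auto
    show "0 \<in> L" unfolding L_def using st(2) by simp
  next
    fix a b assume a: "a \<in> L" and b: "b \<in> L"
    show "a + b \<noteq> dd"
    proof
      assume "a + b = dd"
      then have "(m + a) + (m + b) = F" using F_eq by simp
      then show False using fs(2) a b unfolding L_def by blast
    qed
  next
    fix a b assume a: "a \<in> L" and b: "b \<in> L" and ab: "a + b + m \<le> dd"
    have "(m + a) + (m + b) < F" using ab F_eq m1 by simp
    then have "(m + a) + (m + b) \<in> T" using fs(3) a b unfolding L_def by blast
    moreover have "(m + a) + (m + b) = m + (a + b + m)" by simp
    ultimately show "a + b + m \<in> L" using ab unfolding L_def by simp
  qed
  moreover have "(+) (2 * m) ` Fo dd m L \<subseteq> T \<inter> RR2"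
  proof
    fix y assume "y \<in> (+) (2 * m) ` Fo dd m L"
    then obtain a b where ab: "a \<in> L" "b \<in> L" "dd < a + b + m" "a + b < dd" "y = 2 * m + (a + b)"
      unfolding Fo_def ss_def by auto
    have "(m + a) + (m + b) < F" using ab F_eq by simp
    then have "(m + a) + (m + b) \<in> T" using fs(3) ab unfolding L_def by blast
    moreover have "(m + a) + (m + b) = y" using ab by simp
    ultimately have "y \<in> T" by simp
    then show "y \<in> T \<inter> RR2" using ab F_eq unfolding RR2_def by simp
  qed
  ultimately show "gmap T \<in> Sig" unfolding gmap_def Sig_def L_def by (auto simp: RR2_def)
qed

lemma hmap_gmap: "T \<in> Cm F m \<Longrightarrow> hmap (gmap T) = T"
proof -
  assume T: "T \<in> Cm F m"
  note st = Cm_struct[OF T]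
  show "hmap (gmap T) = T"
  proof (intro equalityI subsetI)
    fix x assume "x \<in> hmap (gmap T)"
    then show "x \<in> T" unfolding hmap_def gmap_def by auto
  next
    fix x assume x: "x \<in> T"
    then have mx: "m \<le> x" "x < F" using st(3) by auto
    show "x \<in> hmap (gmap T)"
    proof (cases "x \<le> m + dd")
      case True
      then have "x - m \<in> {y. y \<le> dd \<and> m + y \<in> T}" using mx x by auto
      moreover have "x = m + (x - m)" using mx by simp
      ultimately show ?thesis unfolding hmap_def gmap_def by (auto intro: image_eqI)
    next
      case False
      then show ?thesis using x mx unfolding hmap_def gmap_def RR2_def by auto
    qed
  qed
qed

lemma gmap_inj: "inj_on gmap (Cm F m)"
  by (metis hmap_gmap inj_onI)

lemma Sig_finite: "finite Sig"
  unfolding Sig_def RR2_def using Vm_finite by (auto intro!: finite_SigmaI)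

lemma card_Sig: "card Sig = (\<Sum>L\<in>Vm dd m. 2 ^ (m - 1 - card (Fo dd m L)))"
proof -
  have "card Sig = (\<Sum>L\<in>Vm dd m. card {U. U \<subseteq> RR2 \<and> (+) (2 * m) ` Fo dd m L \<subseteq> U})"
    unfolding Sig_def using Vm_finite by (simp add: card_SigmaI RR2_def)
  also have "\<dots> = (\<Sum>L\<in>Vm dd m. 2 ^ (m - 1 - card (Fo dd m L)))"
  proof (rule sum.cong)
    fix L assume L: "L \<in> Vm dd m"
    have sub: "(+) (2 * m) ` Fo dd m L \<subseteq> RR2"
      unfolding RR2_def Fo_def using F_eq by auto
    have "card ((+) (2 * m) ` Fo dd m L) = card (Fo dd m L)" by (simp add: card_image)
    then show "card {U. U \<subseteq> RR2 \<and> (+) (2 * m) ` Fo dd m L \<subseteq> U} = 2 ^ (m - 1 - card (Fo dd m L))"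
      using card_between[OF _ sub] card_RR2 by (simp add: RR2_def)
  qed simp
  finally show ?thesis .
qed

lemma cnt_le_Sig: "cnt F m \<le> card Sig"
  unfolding cnt_def using gmap_inj gmap_in Sig_finite by (intro card_inj_on_le) auto

lemma Fo_card_le: "card (Fo dd m L) \<le> m - 1"
proof -
  have "(+) (2 * m) ` Fo dd m L \<subseteq> RR2" unfolding RR2_def Fo_def using F_eq by auto
  then have "card ((+) (2 * m) ` Fo dd m L) \<le> card RR2" by (intro card_mono) (auto simp: RR2_def)
  then show ?thesis using card_RR2 by (simp add: card_image)
qed

context
  assumes dm: "dd < m"
begin

lemma hmap_in: "p \<in> Sig \<Longrightarrow> hmap p \<in> Cm F m"
proof -
  assume p: "p \<in> Sig"
  obtain L U where pLU: "p = (L, U)" by (cases p)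
  have L: "L \<in> Vm dd m" and U: "U \<subseteq> RR2" and forced: "(+) (2 * m) ` Fo dd m L \<subseteq> U"
    using p pLU unfolding Sig_def by auto
  have LA: "L \<subseteq> {0..dd}" "0 \<in> L" "\<And>a b. a \<in> L \<Longrightarrow> b \<in> L \<Longrightarrow> a + b \<noteq> dd"
    using L unfolding Vm_def Adm_def by auto
  define T where "T = (+) m ` L \<union> U"
  have hp: "hmap p = T" unfolding hmap_def pLU T_def by simp
  have Tmem: "\<And>x. x \<in> T \<longleftrightarrow> (\<exists>a\<in>L. x = m + a) \<or> x \<in> U" unfolding T_def by auto
  have Ubig: "\<And>x. x \<in> U \<Longrightarrow> m + dd < x \<and> x < F" using U unfolding RR2_def by auto
  have Tb: "\<And>x. x \<in> T \<Longrightarrow> m \<le> x \<and> x < F"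
  proof -
    fix x assume "x \<in> T"
    then have "(\<exists>a\<in>L. x = m + a) \<or> x \<in> U" using Tmem by blast
    then show "m \<le> x \<and> x < F"
    proof
      assume "\<exists>a\<in>L. x = m + a"
      then obtain a where "a \<in> L" "x = m + a" by blast
      moreover have "a \<le> dd" using LA(1) calculation(1) by auto
      ultimately show ?thesis using F_eq m1 by linarith
    next
      assume "x \<in> U" then show ?thesis using Ubig[of x] by linarith
    qed
  qed
  have UU: "\<And>y z. y \<in> T \<Longrightarrow> z \<in> T \<Longrightarrow> y \<in> U \<or> z \<in> U \<Longrightarrow> F < y + z"
  proof -
    fix y z assume y: "y \<in> T" and z: "z \<in> T" and yz: "y \<in> U \<or> z \<in> U"
    have "m \<le> y" "m \<le> z" using Tb y z by auto
    from yz show "F < y + z"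
    proof
      assume "y \<in> U" then show ?thesis using Ubig[of y] \<open>m \<le> z\<close> F_eq by linarith
    next
      assume "z \<in> U" then show ?thesis using Ubig[of z] \<open>m \<le> y\<close> F_eq by linarith
    qed
  qed
  have fs: "fset F T" unfolding fset_def
  proof (intro conjI ballI impI subsetI)
    fix x assume "x \<in> T"
    then show "x \<in> {1..<F}" using Tb[of x] m1 by auto
  next
    fix y z assume y: "y \<in> T" and z: "z \<in> T"
    show "y + z \<noteq> F"
    proof (cases "y \<in> U \<or> z \<in> U")
      case True then show ?thesis using UU[OF y z] by simp
    next
      case False
      then obtain a b where ab: "a \<in> L" "b \<in> L" "y = m + a" "z = m + b" using y z Tmem by blast
      then have "a + b \<noteq> dd" using LA(3) by blast
      then show ?thesis using ab F_eq by simp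
    qed
  next
    fix y z assume y: "y \<in> T" and z: "z \<in> T" and yzF: "y + z < F"
    show "y + z \<in> T"
    proof (cases "y \<in> U \<or> z \<in> U")
      case True then show ?thesis using UU[OF y z] yzF by simp
    next
      case False
      then obtain a b where ab: "a \<in> L" "b \<in> L" "y = m + a" "z = m + b" using y z Tmem by blast
      then have "a + b < dd" using yzF F_eq by simp
      moreover have "dd < a + b + m" using dm by simp
      ultimately have "a + b \<in> Fo dd m L" unfolding Fo_def ss_def using ab by auto
      then have "2 * m + (a + b) \<in> U" using forced by auto
      moreover have "y + z = 2 * m + (a + b)" using ab by simp
      ultimately have "y + z \<in> U" by simp
      then show ?thesis using Tmem by blast
    qed
  qed
  have mT: "m \<in> T" using LA(2) Tmem by (metis add_0_right)
  have fin: "finite T" using fs by (rule fset_fin)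
  have "Min T = m"
  proof (rule Min_eqI[OF fin])
    fix y assume "y \<in> T" then show "m \<le> y" using Tb by blast
  qed (rule mT)
  then show "hmap p \<in> Cm F m" using fs mT hp unfolding Cm_def by auto
qed

lemma hmap_inj: "inj_on hmap Sig"
proof (rule inj_onI)
  fix p q assume p: "p \<in> Sig" and q: "q \<in> Sig" and eq: "hmap p = hmap q"
  have key: "\<And>r. r \<in> Sig \<Longrightarrow> gmap (hmap r) = r"
  proof -
    fix r assume r: "r \<in> Sig"
    obtain L U where rLU: "r = (L, U)" by (cases r)
    have L: "L \<subseteq> {0..dd}" and U: "U \<subseteq> RR2" using r rLU unfolding Sig_def Vm_def Adm_def by auto
    have "{x. x \<le> dd \<and> m + x \<in> (+) m ` L \<union> U} = L"
      using L U unfolding RR2_def by auto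
    moreover have "((+) m ` L \<union> U) \<inter> RR2 = U"
      using L U unfolding RR2_def by auto
    ultimately show "gmap (hmap r) = r" unfolding gmap_def hmap_def rLU by simp
  qed
  show "p = q" using key[OF p] key[OF q] eq by metis
qed

lemma cnt_eq_Sig: "cnt F m = card Sig"
proof (rule antisym)
  show "cnt F m \<le> card Sig" by (rule cnt_le_Sig)
  show "card Sig \<le> cnt F m"
    unfolding cnt_def using hmap_inj hmap_in Cm_finite by (intro card_inj_on_le) auto
qed

end

end

definition aw :: "nat \<Rightarrow> real" where
  "aw d = (\<Sum>L\<in>Adm d. (1/2) ^ card (ss L \<inter> {..<d}))"

definition Gs :: "nat \<Rightarrow> nat \<Rightarrow> nat set \<Rightarrow> nat set" where
  "Gs d m L = (+) m ` {t \<in> ss L. t + m \<le> d}"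

lemma Adm_sub: "L \<in> Adm d \<Longrightarrow> L \<subseteq> {0..d}" unfolding Adm_def by auto

lemma ss_mono: "A \<subseteq> B \<Longrightarrow> ss A \<subseteq> ss B" unfolding ss_def by blast


lemma aw_nonneg: "0 \<le> aw d" unfolding aw_def by (intro sum_nonneg) simp

context
  fixes d m :: nat
  assumes m1: "1 \<le> m"
begin

lemma Gs_sub: assumes L: "L \<in> Vm d m" shows "Gs d m L \<subseteq> L"
proof
  fix x assume "x \<in> Gs d m L"
  then obtain a b where ab: "a \<in> L" "b \<in> L" "a + b + m \<le> d" "x = m + (a + b)"
    unfolding Gs_def ss_def by auto
  then have "a + b + m \<in> L" using L unfolding Vm_def by blast
  then show "x \<in> L" using ab(4) by (metis add.commute)
qed

lemma Gs_0: "0 \<notin> Gs d m L" using m1 unfolding Gs_def by auto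

lemma card_split: "card (ss L \<inter> {..<d}) = card (Fo d m L) + card (Gs d m L)"
proof -
  have eq: "ss L \<inter> {..<d} = Fo d m L \<union> {t \<in> ss L. t + m \<le> d}"
    unfolding Fo_def using m1 by auto
  have "card (ss L \<inter> {..<d}) = card (Fo d m L) + card {t \<in> ss L. t + m \<le> d}"
    unfolding eq
  proof (rule card_Un_disjoint)
    show "finite (Fo d m L)" unfolding Fo_def by (rule finite_subset[of _ "{..<d}"]) auto
    show "finite {t \<in> ss L. t + m \<le> d}" by (rule finite_subset[of _ "{..d}"]) auto
    show "Fo d m L \<inter> {t \<in> ss L. t + m \<le> d} = {}" unfolding Fo_def by auto
  qed
  also have "card {t \<in> ss L. t + m \<le> d} = card (Gs d m L)"
    unfolding Gs_def by (simp add: card_image)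
  finally show ?thesis .
qed

lemma Gs_finite: "finite (Gs d m L)"
  unfolding Gs_def by (rule finite_imageI, rule finite_subset[of _ "{..d}"]) auto

lemma inj_step:
  assumes L0: "L0 \<in> Vm d m" and L1: "L1 \<in> Vm d m" and Y0: "Y0 \<subseteq> Gs d m L0"
    and eq: "L0 - Y0 = L1 - Y1"
    and IH: "\<And>y. y < x \<Longrightarrow> (y \<in> L0 \<longleftrightarrow> y \<in> L1)"
    and x: "x \<in> L0"
  shows "x \<in> L1"
proof (cases "x \<in> Y0")
  case False then show ?thesis using x eq by blast
next
  case True
  then have "x \<in> Gs d m L0" using Y0 by blast
  then obtain a b where ab: "a \<in> L0" "b \<in> L0" "a + b + m \<le> d" "x = m + (a + b)"
    unfolding Gs_def ss_def by auto
  have "a < x" "b < x" using ab m1 by auto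
  then have "a \<in> L1" "b \<in> L1" using IH ab by auto
  then have "a + b + m \<in> L1" using L1 ab(3) unfolding Vm_def by blast
  then show ?thesis using ab(4) by (simp add: add.commute)
qed

lemma Vm_sum_le: "(\<Sum>L\<in>Vm d m. (1/2::real) ^ card (Fo d m L)) \<le> aw d"
proof -
  define w where "w L = (1/2::real) ^ card (ss L \<inter> {..<d})" for L
  define Sg where "Sg = (SIGMA L:Vm d m. Pow (Gs d m L))"
  have step1: "(1/2::real) ^ card (Fo d m L) \<le> (\<Sum>Y\<in>Pow (Gs d m L). w (L - Y))"
    if L: "L \<in> Vm d m" for L
  proof -
    have "(1/2::real) ^ card (Fo d m L) = 2 ^ card (Gs d m L) * w L"
      unfolding w_def card_split by (simp add: power_add power_one_over)
    also have "\<dots> = (\<Sum>Y\<in>Pow (Gs d m L). w L)"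
      using Gs_finite by (simp add: card_Pow)
    also have "\<dots> \<le> (\<Sum>Y\<in>Pow (Gs d m L). w (L - Y))"
    proof (rule sum_mono)
      fix Y assume "Y \<in> Pow (Gs d m L)"
      have "ss (L - Y) \<inter> {..<d} \<subseteq> ss L \<inter> {..<d}" using ss_mono[of "L - Y" L] by auto
      then have "card (ss (L - Y) \<inter> {..<d}) \<le> card (ss L \<inter> {..<d})" by (intro card_mono) auto
      then show "w L \<le> w (L - Y)" unfolding w_def by (intro power_decreasing) auto
    qed
    finally show ?thesis .
  qed
  have fin: "finite Sg" unfolding Sg_def using Vm_finite Gs_finite by (intro finite_SigmaI) auto
  have inj: "inj_on (\<lambda>p. fst p - snd p) Sg"
  proof (rule inj_onI)
    fix p q assume p: "p \<in> Sg" and q: "q \<in> Sg" and e: "fst p - snd p = fst q - snd q"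
    obtain L0 Y0 where pp: "p = (L0, Y0)" by (cases p)
    obtain L1 Y1 where qq: "q = (L1, Y1)" by (cases q)
    have H: "L0 \<in> Vm d m" "Y0 \<subseteq> Gs d m L0" "L1 \<in> Vm d m" "Y1 \<subseteq> Gs d m L1"
      using p q pp qq unfolding Sg_def by auto
    have e': "L0 - Y0 = L1 - Y1" using e pp qq by simp
    have "\<forall>x. x \<in> L0 \<longleftrightarrow> x \<in> L1"
    proof
      fix x show "x \<in> L0 \<longleftrightarrow> x \<in> L1"
      proof (induction x rule: less_induct)
        case (less x)
        show ?case
        proof
          assume "x \<in> L0"
          then show "x \<in> L1" using inj_step[OF H(1) H(3) H(2) e'] less by blast
        next
          assume "x \<in> L1"
          then show "x \<in> L0" using inj_step[OF H(3) H(1) H(4) e'[symmetric]] less by blast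
        qed
      qed
    qed
    then have LL: "L0 = L1" by blast
    have "Y0 = L0 - (L0 - Y0)" using H(2) Gs_sub[OF H(1)] by blast
    also have "\<dots> = L1 - (L1 - Y1)" using LL e' by simp
    also have "\<dots> = Y1" using H(4) Gs_sub[OF H(3)] by blast
    finally show "p = q" using pp qq LL by simp
  qed
  have img: "(\<lambda>p. fst p - snd p) ` Sg \<subseteq> Adm d"
  proof
    fix L' assume "L' \<in> (\<lambda>p. fst p - snd p) ` Sg"
    then obtain L Y where LY: "L \<in> Vm d m" "Y \<subseteq> Gs d m L" "L' = L - Y" unfolding Sg_def by auto
    have "L \<in> Adm d" using LY(1) unfolding Vm_def by simp
    moreover have "0 \<notin> Y" using LY(2) Gs_0 by blast
    ultimately show "L' \<in> Adm d" using LY(3) unfolding Adm_def by auto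
  qed
  have "(\<Sum>L\<in>Vm d m. (1/2::real) ^ card (Fo d m L)) \<le> (\<Sum>L\<in>Vm d m. \<Sum>Y\<in>Pow (Gs d m L). w (L - Y))"
    by (intro sum_mono step1)
  also have "\<dots> = (\<Sum>p\<in>Sg. w (fst p - snd p))"
    unfolding Sg_def using Vm_finite Gs_finite by (subst sum.Sigma) (auto simp: case_prod_beta)
  also have "\<dots> = (\<Sum>L'\<in>(\<lambda>p. fst p - snd p) ` Sg. w L')"
    using inj by (simp add: sum.reindex)
  also have "\<dots> \<le> (\<Sum>L'\<in>Adm d. w L')"
    using img Adm_finite by (intro sum_mono2) (auto simp: w_def)
  finally show ?thesis unfolding aw_def w_def .
qed

end

lemma pow_sub_real: assumes "c \<le> k" shows "real (2 ^ (k - c)) = 2 ^ k * (1/2) ^ c"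
proof -
  have "(2::real) ^ k = 2 ^ (k - c) * 2 ^ c" using assms by (simp flip: power_add)
  then show ?thesis by (simp add: power_one_over field_simps)
qed

lemma cnt_le_aw:
  assumes m1: "1 \<le> m" and mF: "2 * m \<le> F"
  shows "real (cnt F m) \<le> 2 ^ (m - 1) * aw (F - 2 * m)"
proof -
  have "real (cnt F m) \<le> real (card (Sig F m))" using cnt_le_Sig[OF m1 mF] by simp
  also have "\<dots> = (\<Sum>L\<in>Vm (dd F m) m. 2 ^ (m - 1) * (1/2) ^ card (Fo (dd F m) m L))"
    unfolding card_Sig[OF m1 mF] of_nat_sum
    by (intro sum.cong refl pow_sub_real Fo_card_le[OF m1 mF])
  also have "\<dots> = 2 ^ (m - 1) * (\<Sum>L\<in>Vm (dd F m) m. (1/2) ^ card (Fo (dd F m) m L))"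
    by (simp add: sum_distrib_left)
  also have "\<dots> \<le> 2 ^ (m - 1) * aw (dd F m)"
    by (intro mult_left_mono Vm_sum_le m1) simp
  finally show ?thesis by (simp add: dd_eq[OF m1 mF])
qed

lemma cnt_eq_aw:
  assumes m1: "1 \<le> m" and mF: "2 * m \<le> F" and dm: "F - 2 * m < m"
  shows "real (cnt F m) = 2 ^ (m - 1) * aw (F - 2 * m)"
proof -
  have dm': "dd F m < m" using dm by (simp add: dd_eq[OF m1 mF])
  have VA: "Vm (dd F m) m = Adm (dd F m)" unfolding Vm_def using dm' by auto
  have FS: "\<And>L. Fo (dd F m) m L = ss L \<inter> {..<dd F m}" unfolding Fo_def using dm' by auto
  have "real (cnt F m) = real (card (Sig F m))" using cnt_eq_Sig[OF m1 mF dm'] by simp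
  also have "\<dots> = (\<Sum>L\<in>Vm (dd F m) m. 2 ^ (m - 1) * (1/2) ^ card (Fo (dd F m) m L))"
    unfolding card_Sig[OF m1 mF] of_nat_sum
    by (intro sum.cong refl pow_sub_real Fo_card_le[OF m1 mF])
  also have "\<dots> = 2 ^ (m - 1) * aw (dd F m)"
    unfolding VA FS aw_def by (simp add: sum_distrib_left)
  finally show ?thesis by (simp add: dd_eq[OF m1 mF])
qed

lemma ss_finite: "finite A \<Longrightarrow> finite (ss A)"
proof -
  assume "finite A"
  moreover have "ss A = (\<lambda>p. fst p + snd p) ` (A \<times> A)" unfolding ss_def by force
  ultimately show ?thesis by simp
qed

lemma ss_card:
  fixes A :: "nat set"
  assumes fin: "finite A" and ne: "A \<noteq> {}"
  shows "2 * card A \<le> card (ss A) + 1"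
proof -
  define a0 where "a0 = Min A"
  define a1 where "a1 = Max A"
  have a0A: "a0 \<in> A" and a1A: "a1 \<in> A" using fin ne unfolding a0_def a1_def by auto
  have a0le: "\<And>x. x \<in> A \<Longrightarrow> a0 \<le> x" using fin unfolding a0_def by simp
  have a1ge: "\<And>x. x \<in> A \<Longrightarrow> x \<le> a1" using fin unfolding a1_def by simp
  define X where "X = (+) a0 ` A"
  define Y where "Y = (+) a1 ` A"
  have cX: "card X = card A" unfolding X_def by (simp add: card_image)
  have cY: "card Y = card A" unfolding Y_def by (simp add: card_image)
  have fX: "finite X" "finite Y" unfolding X_def Y_def using fin by auto
  have sub: "X \<union> Y \<subseteq> ss A" unfolding X_def Y_def ss_def using a0A a1A by blast
  have int: "X \<inter> Y \<subseteq> {a0 + a1}"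
  proof
    fix z assume "z \<in> X \<inter> Y"
    then obtain x y where xy: "x \<in> A" "y \<in> A" "z = a0 + x" "z = a1 + y" unfolding X_def Y_def by auto
    have "x \<le> a1" "a0 \<le> y" using xy a1ge a0le by auto
    then have "z = a0 + a1" using xy by linarith
    then show "z \<in> {a0 + a1}" by simp
  qed
  have "card (X \<inter> Y) \<le> 1" using card_mono[OF _ int] by simp
  moreover have "card (X \<union> Y) \<le> card (ss A)" using sub ss_finite[OF fin] by (rule card_mono[rotated])
  moreover have "card X + card Y = card (X \<union> Y) + card (X \<inter> Y)" using fX by (rule card_Un_Int)
  ultimately show ?thesis using cX cY by linarith
qed

lemma Adm0: "Adm 0 = {}" unfolding Adm_def by auto

lemma aw0: "aw 0 = 0" unfolding aw_def Adm0 by simp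

lemma prod_half_card:
  assumes "finite X"
  shows "(\<Prod>x\<in>X. if x \<in> P then 1 else (1/2::real)) = (1/2) ^ card (X - P)"
proof -
  have "(\<Prod>x\<in>X. if x \<in> P then 1 else (1/2::real)) =
        (\<Prod>x\<in>X \<inter> {x. x \<in> P}. 1) * (\<Prod>x\<in>X \<inter> - {x. x \<in> P}. 1/2)"
    using assms by (rule prod.If_cases)
  also have "X \<inter> - {x. x \<in> P} = X - P" by auto
  finally show ?thesis by simp
qed

lemma sum_pow_half:
  assumes fQ: "finite Q"
  shows "(\<Sum>X\<in>Pow Q. (1/2::real) ^ card (X - P)) \<le> (3/2) ^ card Q * (4/3) ^ card (Q \<inter> P)"
proof -
  define g where "g x = (if x \<in> P then 1 else (1/2::real))" for x
  have "(\<Sum>X\<in>Pow Q. (1/2::real) ^ card (X - P)) = (\<Sum>X\<in>Pow Q. (\<Prod>x\<in>X. g x) * (\<Prod>x\<in>Q - X. 1))"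
  proof (rule sum.cong)
    fix X assume "X \<in> Pow Q"
    then have "finite X" using fQ finite_subset by auto
    then show "(1/2::real) ^ card (X - P) = (\<Prod>x\<in>X. g x) * (\<Prod>x\<in>Q - X. 1)"
      unfolding g_def by (simp add: prod_half_card)
  qed simp
  also have "\<dots> = (\<Prod>x\<in>Q. g x + 1)" using fQ by (rule prod_add[symmetric])
  also have "\<dots> = (\<Prod>x\<in>Q. (3/2) * (if x \<in> P then 4/3 else 1))"
    unfolding g_def by (intro prod.cong) auto
  also have "\<dots> = (\<Prod>x\<in>Q. (3/2::real)) * (\<Prod>x\<in>Q. if x \<in> P then 4/3 else (1::real))"
    by (rule prod.distrib)
  also have "(\<Prod>x\<in>Q. (3/2::real)) = (3/2) ^ card Q" by simp
  also have "(\<Prod>x\<in>Q. if x \<in> P then 4/3 else (1::real)) = (4/3) ^ card (Q \<inter> P)"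
  proof -
    have "(\<Prod>x\<in>Q. if x \<in> P then 4/3 else (1::real)) =
          (\<Prod>x\<in>Q \<inter> {x. x \<in> P}. 4/3) * (\<Prod>x\<in>Q \<inter> - {x. x \<in> P}. 1)"
      using fQ by (rule prod.If_cases)
    also have "Q \<inter> {x. x \<in> P} = Q \<inter> P" by auto
    finally show ?thesis by simp
  qed
  finally show ?thesis by simp
qed

lemma sum_A1:
  "(\<Sum>L1\<in>{L1. L1 \<subseteq> {..<h} \<and> 0 \<in> L1}. (8/27::real) ^ card L1) = (8/27) * (35/27) ^ (h - 1)"
  if "1 \<le> h" for h :: nat
proof -
  have A1: "{L1. L1 \<subseteq> {..<h} \<and> 0 \<in> L1} = insert 0 ` Pow {1..<h}"
  proof (intro equalityI subsetI)
    fix L1 assume L1: "L1 \<in> {L1. L1 \<subseteq> {..<h} \<and> 0 \<in> L1}"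
    then have "L1 = insert 0 (L1 - {0})" "L1 - {0} \<in> Pow {1..<h}" by auto
    then show "L1 \<in> insert 0 ` Pow {1..<h}" by blast
  next
    fix L1 assume "L1 \<in> insert 0 ` Pow {1..<h}"
    then show "L1 \<in> {L1. L1 \<subseteq> {..<h} \<and> 0 \<in> L1}" using that by auto
  qed
  have inj: "inj_on (insert 0) (Pow {1..<h})"
  proof (rule inj_onI)
    fix X Y assume "X \<in> Pow {1..<h}" "Y \<in> Pow {1..<h}" "insert 0 X = insert 0 Y"
    then show "X = Y" by (metis Diff_insert_absorb PowD atLeastLessThan_iff not_one_le_zero subset_iff)
  qed
  have "(\<Sum>L1\<in>{L1. L1 \<subseteq> {..<h} \<and> 0 \<in> L1}. (8/27::real) ^ card L1) =
        (\<Sum>X\<in>Pow {1..<h}. (8/27::real) ^ card (insert 0 X))"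
    unfolding A1 using inj by (simp add: sum.reindex)
  also have "\<dots> = (\<Sum>X\<in>Pow {1..<h}. (8/27) * ((\<Prod>x\<in>X. 8/27) * (\<Prod>x\<in>{1..<h} - X. 1)))"
  proof (rule sum.cong)
    fix X assume X: "X \<in> Pow {1..<h}"
    then have "0 \<notin> X" "finite X" using finite_subset by auto
    then show "(8/27::real) ^ card (insert 0 X) = (8/27) * ((\<Prod>x\<in>X. 8/27) * (\<Prod>x\<in>{1..<h} - X. 1))"
      by simp
  qed simp
  also have "\<dots> = (8/27) * (\<Sum>X\<in>Pow {1..<h}. (\<Prod>x\<in>X. 8/27) * (\<Prod>x\<in>{1..<h} - X. (1::real)))"
    by (simp add: sum_distrib_left)
  also have "(\<Sum>X\<in>Pow {1..<h}. (\<Prod>x\<in>X. 8/27) * (\<Prod>x\<in>{1..<h} - X. (1::real))) = (\<Prod>x\<in>{1..<h}. 8/27 + 1)"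
    by (rule prod_add[symmetric]) simp
  also have "\<dots> = (35/27) ^ (h - 1)" by simp
  finally show ?thesis .
qed

lemma alg_step:
  fixes c cQ h2 :: nat
  assumes "cQ + c = h2 + 1" "1 \<le> c"
  shows "(2/3::real) ^ (2 * c - 1) * (3/2) ^ cQ = (3/2) ^ (h2 + 2) * (8/27) ^ c"
proof -
  have e1: "h2 + 2 = cQ + (c + 1)" using assms by simp
  have e2: "3 * c = (2 * c - 1) + (c + 1)" using assms by simp
  have e3: "(2/3::real) ^ 3 = 8/27" by (simp add: power3_eq_cube)
  have e4: "(8/27::real) ^ c = (2/3) ^ (3 * c)" by (simp only: power_mult e3)
  have "(3/2::real) ^ (h2 + 2) * (8/27) ^ c = (3/2) ^ cQ * (3/2) ^ (c + 1) * (2/3) ^ (3 * c)"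
    unfolding e1 e4 by (simp add: power_add)
  also have "\<dots> = (3/2) ^ cQ * (2/3) ^ (2 * c - 1) * ((3/2) ^ (c + 1) * (2/3) ^ (c + 1))"
    unfolding e2 power_add by (simp add: algebra_simps)
  also have "(3/2::real) ^ (c + 1) * (2/3) ^ (c + 1) = 1"
    by (simp flip: power_mult_distrib)
  finally show ?thesis by simp
qed


lemma cardQ:
  fixes d h1 h2 :: nat and L1 :: "nat set"
  assumes hs: "h1 + h2 = d" "1 \<le> h1" "h1 \<le> h2 + 1"
    and L1: "L1 \<subseteq> {..<h1}" "0 \<in> L1"
  shows "card ({h1..<d} - (\<lambda>a. d - a) ` L1) + card L1 = h2 + 1"
proof -
  define I where "I = (\<lambda>a. d - a) ` (L1 - {0})"
  have Isub: "I \<subseteq> {h1..<d}"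
  proof
    fix x assume "x \<in> I"
    then obtain a where a: "a \<in> L1" "a \<noteq> 0" "x = d - a" unfolding I_def by auto
    have "a < h1" using a L1 by auto
    then show "x \<in> {h1..<d}" using a hs by auto
  qed
  have eq: "{h1..<d} - (\<lambda>a. d - a) ` L1 = {h1..<d} - I"
  proof -
    have "(\<lambda>a. d - a) ` L1 = insert d I"
    proof (intro equalityI subsetI)
      fix x assume "x \<in> (\<lambda>a. d - a) ` L1"
      then obtain a where "a \<in> L1" "x = d - a" by auto
      then show "x \<in> insert d I" unfolding I_def by (cases "a = 0") auto
    next
      fix x assume x: "x \<in> insert d I"
      show "x \<in> (\<lambda>a. d - a) ` L1"
      proof (cases "x = d")
        case True then show ?thesis using L1(2) image_eqI[of d "\<lambda>a. d - a" 0] by simp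
      next
        case False then show ?thesis using x unfolding I_def by auto
      qed
    qed
    then show ?thesis by auto
  qed
  have finL1: "finite L1" using L1(1) finite_subset by blast
  have inj: "inj_on (\<lambda>a. d - a) (L1 - {0})"
  proof (rule inj_onI)
    fix a b assume "a \<in> L1 - {0}" "b \<in> L1 - {0}" "d - a = d - b"
    moreover have "a \<le> d" "b \<le> d" using calculation L1 hs by auto
    ultimately show "a = b" by linarith
  qed
  have cI: "card I = card L1 - 1" unfolding I_def using inj finL1 L1(2) by (simp add: card_image)
  have cI2: "card I \<le> h2" using card_mono[OF _ Isub] hs by simp
  have "card ({h1..<d} - I) = h2 - card I"
    using card_Diff_subset[OF _ Isub] finite_subset[OF Isub] hs by simp
  moreover have "card L1 \<ge> 1" using finL1 L1(2) by (metis One_nat_def card_0_eq empty_iff less_one not_le)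
  ultimately show ?thesis unfolding eq using cI cI2 by linarith
qed

lemma aw_bound:
  assumes d1: "1 \<le> d"
  shows "aw d \<le> (2/3) * (3/2) ^ (d div 2) * (35/27) ^ ((d + 1) div 2 - 1)"
proof -
  define h1 where "h1 = (d + 1) div 2"
  define h2 where "h2 = d div 2"
  have hs: "h1 + h2 = d" "1 \<le> h1" "h1 \<le> h2 + 1" "2 * h1 \<le> d + 1"
    unfolding h1_def h2_def using d1 by auto
  define A1 where "A1 = {L1. L1 \<subseteq> {..<h1} \<and> 0 \<in> L1}"
  define Q where "Q L1 = {h1..<d} - (\<lambda>a. d - a) ` L1" for L1
  define g where "g p = (1/2::real) ^ card (ss (fst p)) * (1/2) ^ card (snd p - ss (fst p))" for p
  define Sg where "Sg = (SIGMA L1:A1. Pow (Q L1))"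
  have finA1: "finite A1"
  proof -
    have "A1 \<subseteq> Pow {..<h1}" unfolding A1_def by auto
    then show ?thesis using finite_subset by blast
  qed
  have finQ: "\<And>L1. finite (Q L1)" unfolding Q_def by simp
  have finSg: "finite Sg" unfolding Sg_def using finA1 finQ by auto
  have step1: "aw d \<le> sum g Sg"
    unfolding aw_def
  proof (rule sum_le_included[where i = "\<lambda>p. fst p \<union> snd p"])
    show "finite (Adm d)" by (rule Adm_finite)
    show "finite Sg" by (rule finSg)
    show "\<forall>y\<in>Sg. 0 \<le> g y" unfolding g_def by simp
    show "\<forall>L\<in>Adm d. \<exists>y\<in>Sg. fst y \<union> snd y = L \<and> (1/2) ^ card (ss L \<inter> {..<d}) \<le> g y"
    proof
      fix L assume L: "L \<in> Adm d"
      have LA: "L \<subseteq> {0..d}" "0 \<in> L" "\<And>a b. a \<in> L \<Longrightarrow> b \<in> L \<Longrightarrow> a + b \<noteq> d"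
        using L unfolding Adm_def by auto
      have Ld: "L \<subseteq> {..<d}"
      proof
        fix x assume x: "x \<in> L"
        then have "x \<le> d" using LA(1) by auto
        moreover have "x \<noteq> d" using LA(3)[OF LA(2) x] by simp
        ultimately show "x \<in> {..<d}" by simp
      qed
      define L1 where "L1 = L \<inter> {..<h1}"
      define L2 where "L2 = L \<inter> {h1..<d}"
      have L1A: "L1 \<in> A1" unfolding L1_def A1_def using LA(2) hs by auto
      have L2Q: "L2 \<subseteq> Q L1"
      proof
        fix x assume x: "x \<in> L2"
        have "x \<notin> (\<lambda>a. d - a) ` L1"
        proof
          assume "x \<in> (\<lambda>a. d - a) ` L1"
          then obtain a where a: "a \<in> L1" "x = d - a" by auto
          have "a < h1" "a \<in> L" using a unfolding L1_def by auto
          then have "a + x = d" using a hs by simp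
          then show False using LA(3) \<open>a \<in> L\<close> x unfolding L2_def by auto
        qed
        then show "x \<in> Q L1" using x unfolding Q_def L2_def by auto
      qed
      have yS: "(L1, L2) \<in> Sg" unfolding Sg_def using L1A L2Q by auto
      have un: "L1 \<union> L2 = L" unfolding L1_def L2_def using Ld by auto
      have ss1: "ss L1 \<subseteq> ss L \<inter> {..<d}"
      proof
        fix t assume "t \<in> ss L1"
        then obtain a b where ab: "a \<in> L1" "b \<in> L1" "t = a + b" unfolding ss_def by auto
        have "a < h1" "b < h1" "a \<in> L" "b \<in> L" using ab unfolding L1_def by auto
        then show "t \<in> ss L \<inter> {..<d}" using ab hs unfolding ss_def by auto
      qed
      have ss2: "L2 \<subseteq> ss L \<inter> {..<d}"
      proof
        fix x assume x: "x \<in> L2"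
        then have "x \<in> L" "x < d" unfolding L2_def by auto
        then show "x \<in> ss L \<inter> {..<d}" using LA(2) unfolding ss_def by force
      qed
      have fss1: "finite (ss L1)" using ss1 finite_subset by blast
      have fL2: "finite L2" unfolding L2_def by simp
      have "card (ss L1) + card (L2 - ss L1) = card (ss L1 \<union> (L2 - ss L1))"
        using fss1 fL2 by (intro card_Un_disjoint[symmetric]) auto
      also have "ss L1 \<union> (L2 - ss L1) = ss L1 \<union> L2" by auto
      also have "card (ss L1 \<union> L2) \<le> card (ss L \<inter> {..<d})"
        using ss1 ss2 by (intro card_mono) auto
      finally have cle: "card (ss L1) + card (L2 - ss L1) \<le> card (ss L \<inter> {..<d})" .
      have "(1/2::real) ^ card (ss L \<inter> {..<d}) \<le> (1/2) ^ (card (ss L1) + card (L2 - ss L1))"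
        using cle by (intro power_decreasing) auto
      also have "\<dots> = g (L1, L2)" unfolding g_def by (simp add: power_add)
      finally show "\<exists>y\<in>Sg. fst y \<union> snd y = L \<and> (1/2) ^ card (ss L \<inter> {..<d}) \<le> g y"
        using yS un by force
    qed
  qed
  have step2: "sum g Sg = (\<Sum>L1\<in>A1. \<Sum>L2\<in>Pow (Q L1). g (L1, L2))"
    unfolding Sg_def using finA1 finQ by (subst sum.Sigma) auto
  have step3: "(\<Sum>L2\<in>Pow (Q L1). g (L1, L2)) \<le> (3/2) ^ (h2 + 2) * (8/27) ^ card L1"
    if L1: "L1 \<in> A1" for L1
  proof -
    define cP where "cP = card (ss L1)"
    define c where "c = card L1"
    have L1s: "L1 \<subseteq> {..<h1}" "0 \<in> L1" using L1 unfolding A1_def by auto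
    have finL1: "finite L1" using L1s finite_subset by blast
    have c1: "1 \<le> c" unfolding c_def using finL1 L1s(2) by (metis One_nat_def card_0_eq empty_iff less_one not_le)
    have "2 * card L1 \<le> card (ss L1) + 1" using ss_card[OF finL1] L1s(2) by blast
    then have cPc: "2 * c - 1 \<le> cP" unfolding cP_def c_def by linarith
    have cQ: "card (Q L1) + c = h2 + 1" unfolding Q_def c_def using cardQ[OF hs(1-3) L1s] .
    have "(\<Sum>L2\<in>Pow (Q L1). g (L1, L2)) = (1/2) ^ cP * (\<Sum>L2\<in>Pow (Q L1). (1/2::real) ^ card (L2 - ss L1))"
      unfolding g_def cP_def by (simp add: sum_distrib_left)
    also have "\<dots> \<le> (1/2) ^ cP * ((3/2) ^ card (Q L1) * (4/3) ^ card (Q L1 \<inter> ss L1))"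
      by (intro mult_left_mono sum_pow_half finQ) simp
    also have "\<dots> \<le> (1/2) ^ cP * ((3/2) ^ card (Q L1) * (4/3) ^ cP)"
    proof -
      have "card (Q L1 \<inter> ss L1) \<le> cP" unfolding cP_def using ss_finite[OF finL1] by (intro card_mono) auto
      then have "(4/3::real) ^ card (Q L1 \<inter> ss L1) \<le> (4/3) ^ cP" by (intro power_increasing) auto
      then show ?thesis by (intro mult_left_mono) auto
    qed
    also have "\<dots> = (2/3) ^ cP * (3/2) ^ card (Q L1)"
      by (simp add: power_mult_distrib[symmetric] algebra_simps)
    also have "\<dots> \<le> (2/3) ^ (2 * c - 1) * (3/2) ^ card (Q L1)"
      using cPc by (intro mult_right_mono power_decreasing) auto
    also have "\<dots> = (3/2) ^ (h2 + 2) * (8/27) ^ c" using alg_step[OF cQ c1] .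
    finally show ?thesis unfolding c_def .
  qed
  have "aw d \<le> (\<Sum>L1\<in>A1. \<Sum>L2\<in>Pow (Q L1). g (L1, L2))" using step1 step2 by simp
  also have "\<dots> \<le> (\<Sum>L1\<in>A1. (3/2) ^ (h2 + 2) * (8/27::real) ^ card L1)"
    by (rule sum_mono) (rule step3)
  also have "\<dots> = (3/2) ^ (h2 + 2) * (\<Sum>L1\<in>A1. (8/27::real) ^ card L1)"
    by (simp add: sum_distrib_left)
  also have "(\<Sum>L1\<in>A1. (8/27::real) ^ card L1) = (8/27) * (35/27) ^ (h1 - 1)"
    unfolding A1_def by (rule sum_A1[OF hs(2)])
  also have "(3/2::real) ^ (h2 + 2) * ((8/27) * (35/27) ^ (h1 - 1)) = (2/3) * (3/2) ^ h2 * (35/27) ^ (h1 - 1)"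
    by (simp add: power_add)
  finally show ?thesis unfolding h1_def h2_def .
qed

lemma aw_beta:
  assumes "p \<le> 1"
  shows "aw (2 * j + p) / 2 ^ (j + 1) \<le> (1/3) * (35/36) ^ j"
proof (cases "2 * j + p = 0")
  case True then show ?thesis using aw0 by simp
next
  case False
  then have d1: "1 \<le> 2 * j + p" by linarith
  have p01: "p = 0 \<or> p = 1" using assms by linarith
  have e1: "(2 * j + p) div 2 = j" using p01 by (elim disjE) simp_all
  have e2: "(2 * j + p + 1) div 2 - 1 \<le> j" using p01 by (elim disjE) simp_all
  have "aw (2 * j + p) \<le> (2/3) * (3/2) ^ j * (35/27) ^ ((2 * j + p + 1) div 2 - 1)"
    using aw_bound[OF d1] unfolding e1 .
  also have "\<dots> \<le> (2/3) * (3/2) ^ j * (35/27) ^ j"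
    using e2 by (intro mult_left_mono power_increasing) auto
  also have "(2/3::real) * (3/2) ^ j * (35/27) ^ j = (2/3) * ((3/2) * (35/27)) ^ j"
    by (simp only: power_mult_distrib mult.assoc)
  also have "(3/2::real) * (35/27) = 35/18" by simp
  finally have A: "aw (2 * j + p) \<le> (2/3) * (35/18) ^ j" .
  have B: "(2/3::real) * (35/18) ^ j / 2 ^ (j + 1) = (1/3) * (35/36) ^ j"
  proof -
    have "(35/18::real) ^ j / 2 ^ j = (35/36) ^ j" by (simp add: power_divide[symmetric])
    moreover have "(2::real) ^ (j + 1) = 2 * 2 ^ j" by simp
    ultimately show ?thesis by simp
  qed
  have "aw (2 * j + p) / 2 ^ (j + 1) \<le> (2/3) * (35/18) ^ j / 2 ^ (j + 1)"
    using A by (intro divide_right_mono) auto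
  then show ?thesis using B by simp
qed

definition beta :: "nat \<Rightarrow> nat \<Rightarrow> real" where
  "beta p j = aw (2 * j + p) / 2 ^ (j + 1)"

definition nu :: "nat \<Rightarrow> nat \<Rightarrow> real" where
  "nu p n = real (NF (2 * n + p)) / 2 ^ n"

definition cc :: "nat \<Rightarrow> real" where
  "cc p = 2 ^ p / 2 + suminf (beta p)"

lemma beta_nonneg: "0 \<le> beta p j" unfolding beta_def using aw_nonneg by simp

lemma beta_le: "p \<le> 1 \<Longrightarrow> beta p j \<le> (1/3) * (35/36) ^ j"
  unfolding beta_def by (rule aw_beta)

lemma beta_summable: assumes "p \<le> 1" shows "summable (beta p)"
proof (rule summable_comparison_test)
  show "\<exists>N. \<forall>n\<ge>N. norm (beta p n) \<le> (1/3) * (35/36) ^ n"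
    using beta_le[OF assms] beta_nonneg by auto
  show "summable (\<lambda>n. (1/3::real) * (35/36) ^ n)"
    by (intro summable_mult summable_geometric) simp
qed

lemma cc_pos: "p \<le> 1 \<Longrightarrow> 0 < cc p"
proof -
  assume p: "p \<le> 1"
  have "0 \<le> suminf (beta p)" using beta_summable[OF p] beta_nonneg by (intro suminf_nonneg) auto
  moreover have "0 < (2::real) ^ p / 2" by simp
  ultimately show ?thesis unfolding cc_def by linarith
qed

lemma sum_rev1: "(\<Sum>l\<in>{1..n}. f l) = (\<Sum>i<n. f (n - i))" for f :: "nat \<Rightarrow> real"
  by (rule sum.reindex_bij_witness[where i = "\<lambda>i. n - i" and j = "\<lambda>l. n - l"]) auto

lemma nu_decomp:
  assumes p: "p \<le> 1" and n1: "1 \<le> n"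
  shows "nu p n = 2 ^ p / 2 + (\<Sum>j<n. real (cnt (2 * n + p) (n - j)) / 2 ^ n)"
proof -
  have dv: "(2 * n + p) div 2 = n" using p by auto
  have cH: "card (Hi (2 * n + p)) = n + p - 1" unfolding card_Hi dv using n1 by simp
  have "real (NF (2 * n + p)) = 2 ^ (n + p - 1) + (\<Sum>m\<in>{1..n}. real (cnt (2 * n + p) m))"
    unfolding NF_decomp[of "2 * n + p"] dv cH by simp
  also have "(\<Sum>m\<in>{1..n}. real (cnt (2 * n + p) m)) = (\<Sum>j<n. real (cnt (2 * n + p) (n - j)))"
    by (rule sum_rev1)
  finally have "real (NF (2 * n + p)) = 2 ^ (n + p - 1) + (\<Sum>j<n. real (cnt (2 * n + p) (n - j)))" .
  moreover have "(2::real) ^ (n + p - 1) / 2 ^ n = 2 ^ p / 2"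
  proof -
    have "(2::real) ^ (n + p - 1) * 2 = 2 ^ n * 2 ^ p" using n1 by (simp flip: power_add power_Suc2)
    then show ?thesis by (simp add: field_simps)
  qed
  ultimately show ?thesis unfolding nu_def by (simp add: add_divide_distrib sum_divide_distrib)
qed

lemma gamma_le:
  assumes p: "p \<le> 1" and j: "j < n"
  shows "real (cnt (2 * n + p) (n - j)) / 2 ^ n \<le> beta p j"
proof -
  have m1: "1 \<le> n - j" using j by simp
  have mF: "2 * (n - j) \<le> 2 * n + p" by simp
  have d: "2 * n + p - 2 * (n - j) = 2 * j + p" using j by simp
  have C: "real (cnt (2 * n + p) (n - j)) \<le> 2 ^ (n - j - 1) * aw (2 * j + p)"
    using cnt_le_aw[OF m1 mF] unfolding d .
  have B: "(2::real) ^ (n - j - 1) / 2 ^ n = 1 / 2 ^ (j + 1)"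
  proof -
    have e: "(n - j - 1) + (j + 1) = n" using j by simp
    have "(2::real) ^ n = 2 ^ (n - j - 1) * 2 ^ (j + 1)"
      using power_add[of "2::real" "n - j - 1" "j + 1"] unfolding e .
    then show ?thesis by simp
  qed
  have A: "real (cnt (2 * n + p) (n - j)) / 2 ^ n \<le> 2 ^ (n - j - 1) * aw (2 * j + p) / 2 ^ n"
    using C by (intro divide_right_mono) auto
  have "2 ^ (n - j - 1) * aw (2 * j + p) / 2 ^ n = aw (2 * j + p) * ((2::real) ^ (n - j - 1) / 2 ^ n)"
    by simp
  also have "\<dots> = aw (2 * j + p) / 2 ^ (j + 1)" unfolding B by simp
  finally show ?thesis using A unfolding beta_def by simp
qed

lemma gamma_eq:
  assumes p: "p \<le> 1" and j: "3 * j + p < n"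
  shows "real (cnt (2 * n + p) (n - j)) / 2 ^ n = beta p j"
proof -
  have jn: "j < n" using j by simp
  have m1: "1 \<le> n - j" using jn by simp
  have mF: "2 * (n - j) \<le> 2 * n + p" by simp
  have d: "2 * n + p - 2 * (n - j) = 2 * j + p" using jn by simp
  have dm: "2 * n + p - 2 * (n - j) < n - j" unfolding d using j by simp
  have C: "real (cnt (2 * n + p) (n - j)) = 2 ^ (n - j - 1) * aw (2 * j + p)"
    using cnt_eq_aw[OF m1 mF dm] unfolding d .
  have B: "(2::real) ^ (n - j - 1) / 2 ^ n = 1 / 2 ^ (j + 1)"
  proof -
    have e: "(n - j - 1) + (j + 1) = n" using jn by simp
    have "(2::real) ^ n = 2 ^ (n - j - 1) * 2 ^ (j + 1)"
      using power_add[of "2::real" "n - j - 1" "j + 1"] unfolding e .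
    then show ?thesis by simp
  qed
  have "real (cnt (2 * n + p) (n - j)) / 2 ^ n = aw (2 * j + p) * ((2::real) ^ (n - j - 1) / 2 ^ n)"
    unfolding C by simp
  also have "\<dots> = aw (2 * j + p) / 2 ^ (j + 1)" unfolding B by simp
  finally show ?thesis unfolding beta_def .
qed

lemma div3_at_top: "filterlim (\<lambda>n::nat. (n - 1) div 3) at_top at_top"
  unfolding filterlim_at_top eventually_at_top_linorder
proof
  fix Z :: nat
  show "\<exists>N. \<forall>n\<ge>N. Z \<le> (n - 1) div 3"
  proof (intro exI allI impI)
    fix n assume "3 * Z + 1 \<le> n"
    then have "3 * Z \<le> n - 1" by simp
    then have "(3 * Z) div 3 \<le> (n - 1) div 3" by (rule div_le_mono)
    then show "Z \<le> (n - 1) div 3" by simp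
  qed
qed

lemma div4_at_top: "filterlim (\<lambda>n::nat. n div 4) at_top at_top"
  unfolding filterlim_at_top eventually_at_top_linorder
proof
  fix Z :: nat
  show "\<exists>N. \<forall>n\<ge>N. Z \<le> n div 4"
  proof (intro exI allI impI)
    fix n assume "4 * Z \<le> n"
    then have "(4 * Z) div 4 \<le> n div 4" by (rule div_le_mono)
    then show "Z \<le> n div 4" by simp
  qed
qed

lemma nu_lim:
  assumes p: "p \<le> 1"
  shows "nu p \<longlonglongrightarrow> cc p"
proof (rule tendsto_sandwich)
  define G where "G n j = real (cnt (2 * n + p) (n - j)) / 2 ^ n" for n j
  have Gnn: "\<And>n j. 0 \<le> G n j" unfolding G_def by simp
  show "eventually (\<lambda>n. 2 ^ p / 2 + (\<Sum>j<(n - 1) div 3. beta p j) \<le> nu p n) sequentially"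
    unfolding eventually_at_top_linorder
  proof (intro exI allI impI)
    fix n :: nat assume n1: "1 \<le> n"
    have "(\<Sum>j<(n - 1) div 3. beta p j) = (\<Sum>j<(n - 1) div 3. G n j)"
    proof (rule sum.cong)
      fix j assume "j \<in> {..<(n - 1) div 3}"
      define q where "q = (n - 1) div 3"
      have "j + 1 \<le> q" using \<open>j \<in> {..<(n - 1) div 3}\<close> unfolding q_def by simp
      moreover have "3 * q \<le> n - 1" unfolding q_def by (rule times_div_less_eq_dividend)
      ultimately have "3 * j + 3 \<le> n - 1" by linarith
      then have "3 * j + p < n" using p by linarith
      then show "beta p j = G n j" unfolding G_def using gamma_eq[OF p] by simp
    qed simp
    also have "\<dots> \<le> (\<Sum>j<n. G n j)"
      by (rule sum_mono2) (auto simp: Gnn)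
    finally show "2 ^ p / 2 + (\<Sum>j<(n - 1) div 3. beta p j) \<le> nu p n"
      using nu_decomp[OF p n1] unfolding G_def by simp
  qed
  show "eventually (\<lambda>n. nu p n \<le> 2 ^ p / 2 + (\<Sum>j<n. beta p j)) sequentially"
    unfolding eventually_at_top_linorder
  proof (intro exI allI impI)
    fix n :: nat assume n1: "1 \<le> n"
    have "(\<Sum>j<n. real (cnt (2 * n + p) (n - j)) / 2 ^ n) \<le> (\<Sum>j<n. beta p j)"
      by (rule sum_mono) (use gamma_le[OF p] in auto)
    then show "nu p n \<le> 2 ^ p / 2 + (\<Sum>j<n. beta p j)"
      using nu_decomp[OF p n1] by simp
  qed
  have S: "(\<lambda>n. \<Sum>j<n. beta p j) \<longlonglongrightarrow> suminf (beta p)"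
    using beta_summable[OF p] by (rule summable_LIMSEQ)
  show "(\<lambda>n. 2 ^ p / 2 + (\<Sum>j<n. beta p j)) \<longlonglongrightarrow> cc p"
    unfolding cc_def by (intro tendsto_add tendsto_const S)
  have "(\<lambda>n. \<Sum>j<(n - 1) div 3. beta p j) \<longlonglongrightarrow> suminf (beta p)"
    using filterlim_compose[OF S div3_at_top] .
  then show "(\<lambda>n. 2 ^ p / 2 + (\<Sum>j<(n - 1) div 3. beta p j)) \<longlonglongrightarrow> cc p"
    unfolding cc_def by (intro tendsto_add tendsto_const)
qed

lemma rec_null:
  fixes e u :: "nat \<Rightarrow> real" and r :: real
  assumes u: "u \<longlonglongrightarrow> 0" and r: "0 \<le> r" "r < 1" and rec: "\<And>n. e (Suc n) = u n + r * e n"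
  shows "e \<longlonglongrightarrow> 0"
proof (rule LIMSEQ_I)
  fix eps :: real assume eps: "0 < eps"
  have pos: "0 < (1 - r) * eps / 2" using r eps by simp
  from LIMSEQ_D[OF u pos] obtain N where N': "\<forall>n\<ge>N. norm (u n - 0) < (1 - r) * eps / 2" by blast
  then have N: "\<And>n. N \<le> n \<Longrightarrow> norm (u n - 0) < (1 - r) * eps / 2" by blast
  have bound: "\<bar>e (N + k)\<bar> \<le> eps / 2 + r ^ k * \<bar>e N\<bar>" for k
  proof (induction k)
    case 0 show ?case using eps by simp
  next
    case (Suc k)
    have "\<bar>e (N + Suc k)\<bar> = \<bar>u (N + k) + r * e (N + k)\<bar>" using rec[of "N + k"] by simp
    also have "\<dots> \<le> \<bar>u (N + k)\<bar> + \<bar>r * e (N + k)\<bar>" by (rule abs_triangle_ineq)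
    also have "\<bar>u (N + k)\<bar> + \<bar>r * e (N + k)\<bar> = \<bar>u (N + k)\<bar> + r * \<bar>e (N + k)\<bar>"
      using r by (simp add: abs_mult)
    also have "\<dots> \<le> (1 - r) * eps / 2 + r * (eps / 2 + r ^ k * \<bar>e N\<bar>)"
      using N[of "N + k"] Suc.IH r by (intro add_mono mult_left_mono) auto
    also have "\<dots> = eps / 2 + r ^ Suc k * \<bar>e N\<bar>" by (simp add: field_simps)
    finally show ?case .
  qed
  have "(\<lambda>k. r ^ k * \<bar>e N\<bar>) \<longlonglongrightarrow> 0 * \<bar>e N\<bar>"
    using r by (intro tendsto_mult tendsto_const LIMSEQ_power_zero) auto
  then have lim0: "(\<lambda>k. r ^ k * \<bar>e N\<bar>) \<longlonglongrightarrow> 0" by simp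
  have "0 < eps / 2" using eps by simp
  from LIMSEQ_D[OF lim0 this] obtain K where K': "\<forall>k\<ge>K. norm (r ^ k * \<bar>e N\<bar> - 0) < eps / 2" by blast
  then have K: "\<And>k. K \<le> k \<Longrightarrow> norm (r ^ k * \<bar>e N\<bar> - 0) < eps / 2" by blast
  show "\<exists>no. \<forall>n\<ge>no. norm (e n - 0) < eps"
  proof (intro exI allI impI)
    fix n assume n: "N + K \<le> n"
    define k where "k = n - N"
    have k: "n = N + k" "K \<le> k" using n unfolding k_def by auto
    have "\<bar>r ^ k * \<bar>e N\<bar>\<bar> < eps / 2" using K[OF k(2)] by simp
    then have "r ^ k * \<bar>e N\<bar> < eps / 2" by simp
    then show "norm (e n - 0) < eps" using bound[of k] k(1) by simp
  qed
qed

lemma conv_lim: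
  fixes x :: "nat \<Rightarrow> real"
  assumes x: "x \<longlonglongrightarrow> c"
  shows "(\<lambda>n. \<Sum>i<n. (1/2) ^ i * x (n - i)) \<longlonglongrightarrow> 2 * c"
proof -
  define s where "s n = (\<Sum>i<n. (1/2::real) ^ i * x (n - i))" for n
  have srec: "s (Suc n) = x (Suc n) + (1/2) * s n" for n
  proof -
    have "s (Suc n) = (1/2) ^ 0 * x (Suc n - 0) + (\<Sum>i<n. (1/2::real) ^ Suc i * x (Suc n - Suc i))"
      unfolding s_def by (rule sum.lessThan_Suc_shift)
    also have "(\<Sum>i<n. (1/2::real) ^ Suc i * x (Suc n - Suc i)) = (1/2) * s n"
      unfolding s_def by (simp add: sum_distrib_left mult.assoc)
    finally show ?thesis by simp
  qed
  define e where "e n = s n - 2 * c" for n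
  have xs: "(\<lambda>n. x (Suc n)) \<longlonglongrightarrow> c" using LIMSEQ_Suc[OF x] .
  have "(\<lambda>n. x (Suc n) - c) \<longlonglongrightarrow> c - c" using tendsto_diff[OF xs tendsto_const] .
  then have u: "(\<lambda>n. x (Suc n) - c) \<longlonglongrightarrow> 0" by simp
  have "e \<longlonglongrightarrow> 0"
  proof (rule rec_null[OF u])
    fix n show "e (Suc n) = (x (Suc n) - c) + (1/2) * e n" unfolding e_def srec by (simp add: algebra_simps)
  qed auto
  then have "(\<lambda>n. e n + 2 * c) \<longlonglongrightarrow> 0 + 2 * c" by (intro tendsto_add tendsto_const)
  then show ?thesis unfolding e_def s_def by simp
qed

definition Ssum :: "nat \<Rightarrow> real" where "Ssum K = (\<Sum>k\<in>{1..K}. real (NF k))"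
definition Ev :: "nat \<Rightarrow> real" where "Ev n = (\<Sum>l\<in>{1..n}. real (NF (2 * l)))"
definition Od :: "nat \<Rightarrow> real" where "Od n = (\<Sum>l<n. real (NF (2 * l + 1)))"

lemma Ssum_Suc: "Ssum (Suc K) = Ssum K + real (NF (Suc K))"
  unfolding Ssum_def by simp

lemma Ev_Suc: "Ev (Suc n) = Ev n + real (NF (2 * Suc n))"
  unfolding Ev_def by simp

lemma Od_Suc: "Od (Suc n) = Od n + real (NF (2 * n + 1))"
  unfolding Od_def by simp

lemma S_split: "Ssum (2 * n) = Ev n + Od n \<and> Ssum (2 * n + 1) = Ev n + Od (Suc n)"
proof (induction n)
  case 0
  show ?case by (simp add: Ssum_def Ev_def Od_def)
next
  case (Suc n)
  have A: "Ssum (2 * Suc n) = Ev (Suc n) + Od (Suc n)"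
  proof -
    have "Ssum (2 * Suc n) = Ssum (Suc (2 * n + 1))" by simp
    also have "\<dots> = Ssum (2 * n + 1) + real (NF (Suc (2 * n + 1)))" by (rule Ssum_Suc)
    also have "\<dots> = Ev n + Od (Suc n) + real (NF (2 * Suc n))" using Suc.IH by simp
    also have "\<dots> = Ev (Suc n) + Od (Suc n)" using Ev_Suc by simp
    finally show ?thesis .
  qed
  have B: "Ssum (2 * Suc n + 1) = Ev (Suc n) + Od (Suc (Suc n))"
  proof -
    have "Ssum (2 * Suc n + 1) = Ssum (Suc (2 * Suc n))" by simp
    also have "\<dots> = Ssum (2 * Suc n) + real (NF (Suc (2 * Suc n)))" by (rule Ssum_Suc)
    also have "\<dots> = Ev (Suc n) + Od (Suc n) + real (NF (2 * Suc n + 1))" using A by simp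
    also have "\<dots> = Ev (Suc n) + Od (Suc (Suc n))" using Od_Suc[of "Suc n"] by simp
    finally show ?thesis .
  qed
  show ?case using A B by blast
qed

lemma pow2_split: "i \<le> n \<Longrightarrow> (2::real) ^ n = 2 ^ i * 2 ^ (n - i)"
  by (simp flip: power_add)

lemma Ev_conv: "Ev n / 2 ^ n = (\<Sum>i<n. (1/2) ^ i * nu 0 (n - i))"
proof -
  have "Ev n / 2 ^ n = (\<Sum>l\<in>{1..n}. real (NF (2 * l)) / 2 ^ n)"
    unfolding Ev_def by (simp add: sum_divide_distrib)
  also have "\<dots> = (\<Sum>i<n. real (NF (2 * (n - i))) / 2 ^ n)" by (rule sum_rev1)
  also have "\<dots> = (\<Sum>i<n. (1/2) ^ i * nu 0 (n - i))"
  proof (rule sum.cong)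
    fix i assume "i \<in> {..<n}"
    then have "(2::real) ^ n = 2 ^ i * 2 ^ (n - i)" by (intro pow2_split) simp
    then show "real (NF (2 * (n - i))) / 2 ^ n = (1/2) ^ i * nu 0 (n - i)"
      unfolding nu_def by (simp add: power_one_over field_simps)
  qed simp
  finally show ?thesis .
qed

lemma Od_conv: "Od n / 2 ^ n = (1/2) * (\<Sum>i<n. (1/2) ^ i * nu 1 (n - i - 1))"
proof -
  have "Od n / 2 ^ n = (\<Sum>l<n. real (NF (2 * l + 1)) / 2 ^ n)"
    unfolding Od_def by (simp add: sum_divide_distrib)
  also have "\<dots> = (\<Sum>i<n. real (NF (2 * (n - Suc i) + 1)) / 2 ^ n)"
    by (rule sum.nat_diff_reindex[symmetric])
  also have "\<dots> = (\<Sum>i<n. (1/2) * ((1/2) ^ i * nu 1 (n - i - 1)))"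
  proof (rule sum.cong)
    fix i assume "i \<in> {..<n}"
    then have e: "Suc i \<le> n" by simp
    then have "(2::real) ^ n = 2 ^ Suc i * 2 ^ (n - Suc i)" by (rule pow2_split)
    then show "real (NF (2 * (n - Suc i) + 1)) / 2 ^ n = (1/2) * ((1/2) ^ i * nu 1 (n - i - 1))"
      unfolding nu_def by (simp add: power_one_over field_simps)
  qed simp
  also have "\<dots> = (1/2) * (\<Sum>i<n. (1/2) ^ i * nu 1 (n - i - 1))"
    by (simp add: sum_distrib_left)
  finally show ?thesis .
qed

lemma Ev_lim: "(\<lambda>n. Ev n / 2 ^ n) \<longlonglongrightarrow> 2 * cc 0"
  unfolding Ev_conv by (rule conv_lim[OF nu_lim]) simp

lemma Od_lim: "(\<lambda>n. Od n / 2 ^ n) \<longlonglongrightarrow> cc 1"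
proof -
  define y where "y k = nu 1 (k - 1)" for k
  have "(\<lambda>n. y (Suc n)) \<longlonglongrightarrow> cc 1" unfolding y_def using nu_lim[of 1] by simp
  then have "y \<longlonglongrightarrow> cc 1" by (rule LIMSEQ_imp_Suc)
  then have "(\<lambda>n. \<Sum>i<n. (1/2) ^ i * y (n - i)) \<longlonglongrightarrow> 2 * cc 1" by (rule conv_lim)
  then have "(\<lambda>n. (1/2) * (\<Sum>i<n. (1/2) ^ i * y (n - i))) \<longlonglongrightarrow> (1/2) * (2 * cc 1)"
    by (intro tendsto_mult tendsto_const)
  then show ?thesis unfolding Od_conv y_def by simp
qed

lemma MED2_Ssum: "real (MED2 f) = Ssum ((f - 1) div 2)"
  unfolding MED2_sum Ssum_def by simp

definition LL :: "nat \<Rightarrow> real" where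
  "LL i = (if i = 0 then cc 0 + cc 1 else if i = 3 then 2 * cc 0 + 2 * cc 1 else 2 * cc 0 + cc 1)"

lemma LL_pos: "0 < LL i"
  using cc_pos[of 0] cc_pos[of 1] unfolding LL_def by auto

lemma A_lim:
  assumes i: "i < 4"
  shows "(\<lambda>t. real (MED2 (4 * t + i)) / 2 ^ t) \<longlonglongrightarrow> LL i"
proof -
  have E: "(\<lambda>n. Ev n / 2 ^ n) \<longlonglongrightarrow> 2 * cc 0" by (rule Ev_lim)
  have O: "(\<lambda>n. Od n / 2 ^ n) \<longlonglongrightarrow> cc 1" by (rule Od_lim)
  have cases: "i = 0 \<or> i = 1 \<or> i = 2 \<or> i = 3" using i by linarith
  show ?thesis
  proof -
    { assume i0: "i = 0"
      have E': "(\<lambda>t. Ev (t - 1) / 2 ^ (t - 1)) \<longlonglongrightarrow> 2 * cc 0"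
        by (rule LIMSEQ_imp_Suc) (use E in simp)
      have lim: "(\<lambda>t. (1/2) * (Ev (t - 1) / 2 ^ (t - 1)) + Od t / 2 ^ t) \<longlonglongrightarrow> (1/2) * (2 * cc 0) + cc 1"
        by (intro tendsto_add tendsto_mult tendsto_const E' O)
      have ev: "eventually (\<lambda>t. (1/2) * (Ev (t - 1) / 2 ^ (t - 1)) + Od t / 2 ^ t =
                  real (MED2 (4 * t + i)) / 2 ^ t) sequentially"
        unfolding eventually_at_top_linorder
      proof (intro exI allI impI)
        fix t :: nat assume t1: "1 \<le> t"
        have k: "(4 * t + i - 1) div 2 = 2 * (t - 1) + 1" using i0 t1 by simp
        have "real (MED2 (4 * t + i)) = Ev (t - 1) + Od t"
          unfolding MED2_Ssum k using S_split[of "t - 1"] t1 by simp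
        moreover have "(2::real) ^ t = 2 * 2 ^ (t - 1)" using t1 by (simp flip: power_Suc)
        ultimately show "(1/2) * (Ev (t - 1) / 2 ^ (t - 1)) + Od t / 2 ^ t = real (MED2 (4 * t + i)) / 2 ^ t"
          by (simp add: field_simps)
      qed
      have "LL i = (1/2) * (2 * cc 0) + cc 1" unfolding LL_def using i0 by simp
      then have ?thesis using tendsto_cong[OF ev] lim by simp }
    moreover
    { assume i12: "i = 1 \<or> i = 2"
      have lim: "(\<lambda>t. Ev t / 2 ^ t + Od t / 2 ^ t) \<longlonglongrightarrow> 2 * cc 0 + cc 1"
        by (intro tendsto_add E O)
      have ev: "\<And>t. Ev t / 2 ^ t + Od t / 2 ^ t = real (MED2 (4 * t + i)) / 2 ^ t"
      proof -
        fix t :: nat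
        have k: "(4 * t + i - 1) div 2 = 2 * t" using i12 by auto
        have "real (MED2 (4 * t + i)) = Ev t + Od t"
          unfolding MED2_Ssum k using S_split[of t] by simp
        then show "Ev t / 2 ^ t + Od t / 2 ^ t = real (MED2 (4 * t + i)) / 2 ^ t"
          by (simp add: add_divide_distrib)
      qed
      have "LL i = 2 * cc 0 + cc 1" unfolding LL_def using i12 by auto
      then have ?thesis using lim unfolding ev by simp }
    moreover
    { assume i3: "i = 3"
      have O': "(\<lambda>t. Od (Suc t) / 2 ^ (Suc t)) \<longlonglongrightarrow> cc 1" using LIMSEQ_Suc[OF O] .
      have lim: "(\<lambda>t. Ev t / 2 ^ t + 2 * (Od (Suc t) / 2 ^ (Suc t))) \<longlonglongrightarrow> 2 * cc 0 + 2 * cc 1"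
        by (intro tendsto_add tendsto_mult tendsto_const E O')
      have ev: "\<And>t. Ev t / 2 ^ t + 2 * (Od (Suc t) / 2 ^ (Suc t)) = real (MED2 (4 * t + i)) / 2 ^ t"
      proof -
        fix t :: nat
        have k: "(4 * t + i - 1) div 2 = 2 * t + 1" using i3 by simp
        have "real (MED2 (4 * t + i)) = Ev t + Od (Suc t)"
          unfolding MED2_Ssum k using S_split[of t] by simp
        then show "Ev t / 2 ^ t + 2 * (Od (Suc t) / 2 ^ (Suc t)) = real (MED2 (4 * t + i)) / 2 ^ t"
          by (simp add: field_simps)
      qed
      have "LL i = 2 * cc 0 + 2 * cc 1" unfolding LL_def using i3 by simp
      then have ?thesis using lim unfolding ev by simp }
    ultimately show ?thesis using cases by blast
  qed
qed

theorem proposition4p5: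
  "\<exists>D :: nat \<Rightarrow> real. \<forall>i<4. D i > 0 \<and>
     (\<lambda>f. real (MED2 f)) \<sim>[inf at_top (principal {f. f mod 4 = i})]
       (\<lambda>f. D i * 2 powr (real f / 4))"
proof (intro exI allI impI conjI)
  define D where "D i = LL i / 2 powr (real i / 4)" for i :: nat
  fix i :: nat assume i: "i < 4"
  show "D i > 0" unfolding D_def using LL_pos by simp
  define g where "g t = real (MED2 (4 * t + i)) / 2 powr (real (4 * t + i) / 4)" for t
  have geq: "g t = (real (MED2 (4 * t + i)) / 2 ^ t) / 2 powr (real i / 4)" for t
  proof -
    have e: "real (4 * t + i) / 4 = real t + real i / 4" by simp
    have "(2::real) powr (real (4 * t + i) / 4) = 2 powr (real t + real i / 4)" unfolding e ..
    also have "\<dots> = 2 powr real t * 2 powr (real i / 4)" by (rule powr_add)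
    also have "\<dots> = 2 ^ t * 2 powr (real i / 4)" using powr_realpow[of 2 t] by simp
    finally have "(2::real) powr (real (4 * t + i) / 4) = 2 ^ t * 2 powr (real i / 4)" .
    then show ?thesis unfolding g_def by simp
  qed
  have glim: "g \<longlonglongrightarrow> D i"
    unfolding geq D_def by (intro tendsto_divide A_lim[OF i] tendsto_const) simp
  have c1: "((\<lambda>f. g (f div 4)) \<longlongrightarrow> D i) at_top"
    using filterlim_compose[OF glim div4_at_top] .
  have c2: "((\<lambda>f. g (f div 4)) \<longlongrightarrow> D i) (inf at_top (principal {f. f mod 4 = i}))"
    by (rule tendsto_mono[OF inf_le1 c1])
  have ev: "eventually (\<lambda>f. g (f div 4) = real (MED2 f) / 2 powr (real f / 4))
              (inf at_top (principal {f. f mod 4 = i}))"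
    unfolding eventually_inf_principal
  proof (rule always_eventually, intro allI impI)
    fix f :: nat assume "f \<in> {f. f mod 4 = i}"
    then have fm: "f mod 4 = i" by simp
    have "4 * (f div 4) + f mod 4 = f" by (rule mult_div_mod_eq)
    then have "4 * (f div 4) + i = f" using fm by simp
    then show "g (f div 4) = real (MED2 f) / 2 powr (real f / 4)" unfolding g_def by simp
  qed
  have lim: "((\<lambda>f. real (MED2 f) / 2 powr (real f / 4)) \<longlongrightarrow> D i) (inf at_top (principal {f. f mod 4 = i}))"
    using tendsto_cong[OF ev] c2 by simp
  have "D i \<noteq> 0" unfolding D_def using LL_pos[of i] by simp
  then show "(\<lambda>f. real (MED2 f)) \<sim>[inf at_top (principal {f. f mod 4 = i})] (\<lambda>f. D i * 2 powr (real f / 4))"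
    using asymp_equivI'_const[OF lim] by simp
qed

end
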